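(* Fix $0<p<1$, let $q=p^2+(1-p)^2$, $\phi=1_C$, $h^{(p)}_\varnothing=(1-p)1_{C_0}-p\,1_{C_2}$, and $e_\varnothing=h^{(p)}_\varnothing/\sqrt{p(1-p)}$. In the orthonormal basis $\{\phi,e_\varnothing\}$, the compression of $K_\infty$ to $\mathrm{span}\{\phi,e_\varnothing\}$ has matrix $$M(p)=\begin{pmatrix}\frac1{1-q}&\frac{(2p-1)\sqrt{p(1-p)}}{1-q}\\ \frac{(2p-1)\sqrt{p(1-p)}}{1-q}&1\end{pmatrix}.$$ In particular $\lambda_{\max}(K_\infty)\ge\lambda_{\max}(M(p))$, where $$\lambda_{\max}(M(p))=\frac12\Big(\frac1{1-q}+1\Big)+\frac12\sqrt{\Big(\frac1{1-q}-1\Big)^2+\frac{4(2p-1)^2p(1-p)}{(1-q)^2}}.$$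
   Context: Let $S_0(x)=x/3$, $S_2(x)=(x+2)/3$ on $[0,1]$ and let $C$ be the middle-third Cantor set. For $0<p<1$, $\mu_p$ is the unique Borel probability measure on $[0,1]$ with $\mu_p=p\,\mu_p\circ S_0^{-1}+(1-p)\,\mu_p\circ S_2^{-1}$. For words $w\in\{0,2\}^n$, $S_w=S_{w_1}\circ\cdots\circ S_{w_n}$, $C_w=S_w(C)$ (so $C_0=S_0(C)$, $C_2=S_2(C)$). Inner product $\langle f,g\rangle=\int\overline fg\,d\mu_p$. $K_mf=\sum_{|u|\le m}\langle1_{C_u},f\rangle1_{C_u}$, and $K_\infty=\lim_{m\to\infty}K_m$ in operator norm (this limit exists and is compact positive self-adjoint). $\lambda_{\max}(T)$ denotes the largest eigenvalue of a compact positive self-adjoint operator (or symmetric matrix) $T$. *)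

theory Defs
  imports "HOL-Analysis.Analysis" "HOL-Probability.Probability"
begin

definition Sd :: "nat \<Rightarrow> real \<Rightarrow> real" where
  "Sd d x = (x + real d) / 3"

definition Sw :: "nat list \<Rightarrow> real \<Rightarrow> real" where
  "Sw w = foldr (\<lambda>d g. Sd d \<circ> g) w id"

definition words_eq :: "nat \<Rightarrow> nat list set" where
  "words_eq n = {w. length w = n \<and> set w \<subseteq> {0, 2}}"

definition words_le :: "nat \<Rightarrow> nat list set" where
  "words_le m = {w. length w \<le> m \<and> set w \<subseteq> {0, 2}}"

definition cantor :: "real set" where
  "cantor = (\<Inter>n. \<Union>w\<in>words_eq n. Sw w ` {0..1})"

definition Cw :: "nat list \<Rightarrow> real set" where
  "Cw w = Sw w ` cantor"

definition mu :: "real \<Rightarrow> real measure" where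
  "mu p = (THE M. sets M = sets borel \<and> prob_space M \<and> emeasure M {0..1} = 1 \<and>
      (\<forall>A\<in>sets borel. emeasure M A =
          ennreal p * emeasure M (Sd 0 -` A) + ennreal (1 - p) * emeasure M (Sd 2 -` A)))"

definition inner_mu :: "real \<Rightarrow> (real \<Rightarrow> complex) \<Rightarrow> (real \<Rightarrow> complex) \<Rightarrow> complex" where
  "inner_mu p f g = (\<integral>x. cnj (f x) * g x \<partial>mu p)"

definition L2 :: "real \<Rightarrow> (real \<Rightarrow> complex) \<Rightarrow> bool" where
  "L2 p f \<longleftrightarrow> f \<in> borel_measurable (mu p) \<and> integrable (mu p) (\<lambda>x. (cmod (f x))\<^sup>2)"

definition L2norm :: "real \<Rightarrow> (real \<Rightarrow> complex) \<Rightarrow> real" where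
  "L2norm p f = sqrt (\<integral>x. (cmod (f x))\<^sup>2 \<partial>mu p)"

definition ind :: "real set \<Rightarrow> real \<Rightarrow> complex" where
  "ind A = indicator A"

definition Km :: "real \<Rightarrow> nat \<Rightarrow> (real \<Rightarrow> complex) \<Rightarrow> (real \<Rightarrow> complex)" where
  "Km p m f = (\<lambda>x. \<Sum>u\<in>words_le m. inner_mu p (ind (Cw u)) f * ind (Cw u) x)"

definition is_K_inf :: "real \<Rightarrow> ((real \<Rightarrow> complex) \<Rightarrow> (real \<Rightarrow> complex)) \<Rightarrow> bool" where
  "is_K_inf p T \<longleftrightarrow> (\<forall>f. L2 p f \<longrightarrow> L2 p (T f)) \<and>
     (\<forall>\<epsilon>>0. \<exists>N. \<forall>m\<ge>N. \<forall>f. L2 p f \<longrightarrow>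
        L2norm p (\<lambda>x. Km p m f x - T f x) \<le> \<epsilon> * L2norm p f)"

definition K_inf :: "real \<Rightarrow> (real \<Rightarrow> complex) \<Rightarrow> (real \<Rightarrow> complex)" where
  "K_inf p = (SOME T. is_K_inf p T)"

definition lam_max_op :: "real \<Rightarrow> ((real \<Rightarrow> complex) \<Rightarrow> (real \<Rightarrow> complex)) \<Rightarrow> real" where
  "lam_max_op p T = (GREATEST l::real. \<exists>f. L2 p f \<and> L2norm p f \<noteq> 0 \<and>
        (AE x in mu p. T f x = complex_of_real l * f x))"

definition lam_max_mat :: "real^2^2 \<Rightarrow> real" where
  "lam_max_mat M = (GREATEST l::real. \<exists>v::real^2. v \<noteq> 0 \<and> M *v v = l *\<^sub>R v)"

definition Mp :: "real \<Rightarrow> real^2^2" where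
  "Mp p = (let q = p\<^sup>2 + (1 - p)\<^sup>2 in
     (\<chi> i j. if i = 1 \<and> j = 1 then 1 / (1 - q)
             else if i = 2 \<and> j = 2 then 1
             else (2 * p - 1) * sqrt (p * (1 - p)) / (1 - q)))"

end

theory Submission
  imports Defs
begin



definition dgn :: "bool \<Rightarrow> nat" where "dgn b = (if b then 0 else 2)"

definition Xs :: "bool stream \<Rightarrow> real" where
  "Xs \<omega> = (\<Sum>i. real (dgn (\<omega> !! i)) / 3 ^ Suc i)"

lemma Xs_summable: "summable (\<lambda>i. real (dgn (\<omega> !! i)) / 3 ^ Suc i)"
proof (rule summable_comparison_test')
  show "summable (\<lambda>i. 2 * (1/3::real) ^ Suc i)"
    by (intro summable_mult summable_ignore_initial_segment[where k=1, simplified] complete_algebra_summable_geometric) auto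
  show "norm (real (dgn (\<omega> !! i)) / 3 ^ Suc i) \<le> 2 * (1/3) ^ Suc i" for i
    by (auto simp: dgn_def power_divide)
qed

lemma geo_third: "(\<Sum>i. 2 * (1/3::real) ^ Suc i) = 1"
proof -
  have "(\<Sum>i. 2 * (1/3::real) ^ Suc i) = (\<Sum>i. (2/3) * (1/3::real) ^ i)"
    by simp
  also have "\<dots> = (2/3) * (\<Sum>i. (1/3::real) ^ i)"
    by (rule suminf_mult) (rule summable_geometric, simp)
  also have "\<dots> = 1" by (simp add: suminf_geometric)
  finally show ?thesis .
qed

lemma Xs_bounds: "0 \<le> Xs \<omega> \<and> Xs \<omega> \<le> 1"
proof
  show "0 \<le> Xs \<omega>" unfolding Xs_def by (rule suminf_nonneg[OF Xs_summable]) auto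
  have "Xs \<omega> \<le> (\<Sum>i. 2 * (1/3::real) ^ Suc i)"
    unfolding Xs_def
  proof (rule suminf_le[OF _ Xs_summable])
    show "summable (\<lambda>i. 2 * (1/3::real) ^ Suc i)"
      by (intro summable_mult summable_ignore_initial_segment[where k=1, simplified] complete_algebra_summable_geometric) auto
  qed (auto simp: dgn_def power_divide)
  then show "Xs \<omega> \<le> 1" using geo_third by simp
qed

lemma Xs_Stream: "Xs (b ## \<omega>) = Sd (dgn b) (Xs \<omega>)"
proof -
  have s: "summable (\<lambda>i. real (dgn ((b ## \<omega>) !! i)) / 3 ^ Suc i)" by (rule Xs_summable)
  have "Xs (b ## \<omega>) = real (dgn b) / 3 + (\<Sum>i. real (dgn ((b ## \<omega>) !! Suc i)) / 3 ^ Suc (Suc i))"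
    unfolding Xs_def using suminf_split_head[OF s] by simp
  also have "(\<Sum>i. real (dgn ((b ## \<omega>) !! Suc i)) / 3 ^ Suc (Suc i)) = (\<Sum>i. (1/3) * (real (dgn (\<omega> !! i)) / 3 ^ Suc i))"
    by simp
  also have "\<dots> = (1/3) * Xs \<omega>" unfolding Xs_def by (rule suminf_mult[OF Xs_summable])
  finally show ?thesis by (simp add: Sd_def add_divide_distrib)
qed

lemma Xs_measurable: "Xs \<in> borel_measurable (stream_space (measure_pmf B))"
  unfolding Xs_def
proof (intro borel_measurable_suminf)
  fix i
  have "(\<lambda>b. real (dgn b) / 3 ^ Suc i) \<in> borel_measurable (measure_pmf B)" by simp
  then show "(\<lambda>x. real (dgn (x !! i)) / 3 ^ Suc i) \<in> borel_measurable (stream_space (measure_pmf B))"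
    using measurable_compose[OF measurable_snth] by blast
qed

lemma Sd_measurable[measurable]: "Sd d \<in> borel_measurable borel"
  unfolding Sd_def by measurable

definition mu0 :: "real \<Rightarrow> real measure" where
  "mu0 p = distr (stream_space (measure_pmf (bernoulli_pmf p))) borel Xs"

definition Pmu :: "real \<Rightarrow> real measure \<Rightarrow> bool" where
  "Pmu p M \<longleftrightarrow> sets M = sets borel \<and> prob_space M \<and> emeasure M {0..1} = 1 \<and>
      (\<forall>A\<in>sets borel. emeasure M A =
          ennreal p * emeasure M (Sd 0 -` A) + ennreal (1 - p) * emeasure M (Sd 2 -` A))"

lemma mu0_P:
  assumes "0 < p" "p < 1"
  shows "Pmu p (mu0 p)"
proof -
  let ?B = "measure_pmf (bernoulli_pmf p)"
  let ?S = "stream_space ?B"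
  interpret S: prob_space ?S by (rule prob_space.prob_space_stream_space) (rule prob_space_measure_pmf)
  have meas: "Xs \<in> ?S \<rightarrow>\<^sub>M borel" by (rule Xs_measurable)
  have sets: "sets (mu0 p) = sets borel" unfolding mu0_def by simp
  have prob: "prob_space (mu0 p)" unfolding mu0_def by (rule S.prob_space_distr[OF meas])
  have spS: "space ?S = UNIV" by (simp add: space_stream_space streams_UNIV)
  have e01: "emeasure (mu0 p) {0..1} = 1"
    unfolding mu0_def using Xs_bounds
    by (subst emeasure_distr[OF meas]) (auto simp: spS S.emeasure_space_1[simplified spS] vimage_def)
  have eq: "emeasure (mu0 p) A =
          ennreal p * emeasure (mu0 p) (Sd 0 -` A) + ennreal (1 - p) * emeasure (mu0 p) (Sd 2 -` A)"
    if A: "A \<in> sets borel" for A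
  proof -
    have Am: "Xs -` A \<inter> space ?S \<in> sets ?S" using meas A by measurable
    have "emeasure (mu0 p) A = emeasure ?S (Xs -` A \<inter> space ?S)"
      unfolding mu0_def by (rule emeasure_distr[OF meas A])
    also have "\<dots> = \<integral>\<^sup>+ t. emeasure ?S {x \<in> space ?S. t ## x \<in> Xs -` A \<inter> space ?S} \<partial>?B"
      by (rule prob_space.emeasure_stream_space[OF prob_space_measure_pmf Am])
    also have "\<dots> = \<integral>\<^sup>+ t. emeasure (mu0 p) (Sd (dgn t) -` A) \<partial>?B"
    proof (rule nn_integral_cong)
      fix t
      have "{x \<in> space ?S. t ## x \<in> Xs -` A \<inter> space ?S} = Xs -` (Sd (dgn t) -` A) \<inter> space ?S"
        by (auto simp: spS Xs_Stream)
      moreover have "Sd (dgn t) -` A \<in> sets borel" using measurable_sets_borel[OF Sd_measurable A] by simp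
      ultimately show "emeasure ?S {x \<in> space ?S. t ## x \<in> Xs -` A \<inter> space ?S} = emeasure (mu0 p) (Sd (dgn t) -` A)"
        unfolding mu0_def by (simp add: emeasure_distr[OF meas])
    qed
    also have "\<dots> = ennreal p * emeasure (mu0 p) (Sd 0 -` A) + ennreal (1 - p) * emeasure (mu0 p) (Sd 2 -` A)"
      using assms by (subst nn_integral_bernoulli_pmf) (auto simp: dgn_def mult.commute)
    finally show ?thesis .
  qed
  show ?thesis unfolding Pmu_def using sets prob e01 eq by blast
qed




lemma Pmu_cdf:
  assumes P: "Pmu p M" and p: "0 < p" "p < 1"
  shows "\<And>a. a < 0 \<Longrightarrow> measure M {..a} = 0"
    and "\<And>a. 1 \<le> a \<Longrightarrow> measure M {..a} = 1"
    and "\<And>a. measure M {..a} = p * measure M {..3*a} + (1-p) * measure M {..3*a-2}"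
proof -
  have sets: "sets M = sets borel" and pr: "prob_space M" and e01: "emeasure M {0..1} = 1"
    and eq: "\<And>A. A\<in>sets borel \<Longrightarrow> emeasure M A =
          ennreal p * emeasure M (Sd 0 -` A) + ennreal (1 - p) * emeasure M (Sd 2 -` A)"
    using P unfolding Pmu_def by auto
  interpret prob_space M by (rule pr)
  have sp: "space M = UNIV" using sets_eq_imp_space_eq[OF sets] by simp
  have m01: "measure M {0..1} = 1" using e01 by (simp add: emeasure_eq_measure)
  have mc: "measure M (UNIV - {0..1}) = 0"
    using prob_compl[of "{0..1}"] m01 sets sp by simp
  show "measure M {..a} = 0" if "a < 0" for a
  proof -
    have "{..a} \<subseteq> UNIV - {0..1}" using that by auto
    then have "measure M {..a} \<le> measure M (UNIV - {0..1})"
      by (intro finite_measure_mono) (auto simp: sets)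
    then show ?thesis using mc measure_nonneg[of M "{..a}"] by linarith
  qed
  show "measure M {..a} = 1" if "1 \<le> a" for a
  proof -
    have "{0..1} \<subseteq> {..a}" using that by auto
    then have "measure M {0..1} \<le> measure M {..a}"
      by (intro finite_measure_mono) (auto simp: sets)
    then show ?thesis using m01 prob_le_1[of "{..a}"] by linarith
  qed
  show "measure M {..a} = p * measure M {..3*a} + (1-p) * measure M {..3*a-2}" for a
  proof -
    have v0: "Sd 0 -` {..a} = {..3*a}" by (auto simp: Sd_def)
    have v2: "Sd 2 -` {..a} = {..3*a-2}" by (auto simp: Sd_def)
    have "ennreal (measure M {..a}) = ennreal p * ennreal (measure M {..3*a}) + ennreal (1-p) * ennreal (measure M {..3*a-2})"
      using eq[of "{..a}"] v0 v2 by (simp add: emeasure_eq_measure)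
    also have "\<dots> = ennreal (p * measure M {..3*a} + (1-p) * measure M {..3*a-2})"
      using p by (simp add: ennreal_mult'' ennreal_plus)
    finally show ?thesis by (subst (asm) ennreal_inj) (use p in auto)
  qed
qed

lemma Pmu_unique:
  assumes PM: "Pmu p M" and PN: "Pmu p N" and p: "0 < p" "p < 1"
  shows "M = N"
proof -
  define G where "G a = measure M {..a} - measure N {..a}" for a
  define r where "r = max p (1-p)"
  have r: "0 \<le> r" "r < 1" using p by (auto simp: r_def)
  note M = Pmu_cdf[OF PM p] and N = Pmu_cdf[OF PN p]
  have G0: "G a = 0" if "a < 0 \<or> 1 \<le> a" for a using that M(1,2) N(1,2) by (auto simp: G_def)
  have Grec: "G a = p * G (3*a) + (1-p) * G (3*a-2)" for a
    using M(3)[of a] N(3)[of a] by (simp add: G_def algebra_simps)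
  have bound: "\<forall>a. \<bar>G a\<bar> \<le> r ^ n" for n
  proof (induction n)
    case 0
    show ?case
    proof
      fix a :: real
      interpret m: prob_space M using PM by (simp add: Pmu_def)
      interpret n: prob_space N using PN by (simp add: Pmu_def)
      show "\<bar>G a\<bar> \<le> r^0" unfolding G_def abs_le_iff power_0 using m.prob_le_1[of "{..a}"] n.prob_le_1[of "{..a}"]
        measure_nonneg[of M "{..a}"] measure_nonneg[of N "{..a}"]
        by linarith
    qed
  next
    case (Suc n)
    show ?case
    proof
      fix a :: real
      consider "a < 0 \<or> 1 \<le> a" | "0 \<le> a" "a < 1/3" | "1/3 \<le> a" "a < 2/3" | "2/3 \<le> a" "a < 1" by linarith
      then show "\<bar>G a\<bar> \<le> r ^ Suc n"
      proof cases
        case 1 then show ?thesis using G0 r by simp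
      next
        case 2
        then have "G a = p * G (3*a)" using Grec[of a] G0[of "3*a-2"] by simp
        moreover have "p * \<bar>G (3*a)\<bar> \<le> r * r ^ n"
          using Suc p r by (intro mult_mono) (auto simp: r_def)
        ultimately show ?thesis using p by (simp add: abs_mult)
      next
        case 3
        then have "G a = 0" using Grec[of a] G0[of "3*a-2"] G0[of "3*a"] by simp
        then show ?thesis using r by simp
      next
        case 4
        then have "G a = (1-p) * G (3*a-2)" using Grec[of a] G0[of "3*a"] by simp
        moreover have "(1-p) * \<bar>G (3*a-2)\<bar> \<le> r * r ^ n"
          using Suc p r by (intro mult_mono) (auto simp: r_def)
        ultimately show ?thesis using p by (simp add: abs_mult)
      qed
    qed
  qed
  have "G a = 0" for a
  proof -
    have "(\<lambda>n. r ^ n) \<longlonglongrightarrow> 0" using r by (intro LIMSEQ_power_zero) auto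
    moreover have "\<bar>G a\<bar> \<le> r ^ n" for n using bound by blast
    ultimately have "\<bar>G a\<bar> \<le> 0"
      by (intro tendsto_lowerbound[of "\<lambda>n. r^n"]) auto
    then show ?thesis by simp
  qed
  then have "cdf M = cdf N" unfolding cdf_def G_def by (auto simp: fun_eq_iff)
  moreover have "real_distribution M" "real_distribution N"
    using PM PN unfolding Pmu_def real_distribution_def real_distribution_axioms_def by auto
  ultimately show ?thesis using cdf_unique by blast
qed

lemma mu_P:
  assumes "0 < p" "p < 1"
  shows "Pmu p (mu p)"
proof -
  have "mu p = mu0 p"
    unfolding mu_def
  proof (rule the_equality)
    show "sets (mu0 p) = sets borel \<and> prob_space (mu0 p) \<and> emeasure (mu0 p) {0..1} = 1 \<and>
      (\<forall>A\<in>sets borel. emeasure (mu0 p) A =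
          ennreal p * emeasure (mu0 p) (Sd 0 -` A) + ennreal (1 - p) * emeasure (mu0 p) (Sd 2 -` A))"
      using mu0_P[OF assms] unfolding Pmu_def .
    fix M assume "sets M = sets borel \<and> prob_space M \<and> emeasure M {0..1} = 1 \<and>
      (\<forall>A\<in>sets borel. emeasure M A =
          ennreal p * emeasure M (Sd 0 -` A) + ennreal (1 - p) * emeasure M (Sd 2 -` A))"
    then have "Pmu p M" unfolding Pmu_def .
    then show "M = mu0 p" using Pmu_unique[OF _ mu0_P[OF assms] assms] by blast
  qed
  then show ?thesis using mu0_P[OF assms] by simp
qed




lemma Sw_Nil[simp]: "Sw [] = id" by (simp add: Sw_def)
lemma Sw_Cons[simp]: "Sw (d # w) = Sd d \<circ> Sw w" by (simp add: Sw_def)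

lemma Sw_affine: "Sw w x = Sw w 0 + x / 3 ^ length w"
proof (induction w arbitrary: x)
  case (Cons d w)
  have "Sw (d # w) x = (Sw w x + real d) / 3" by (simp add: Sd_def)
  also have "\<dots> = (Sw w 0 + x / 3 ^ length w + real d) / 3" using Cons.IH[of x] by simp
  finally have A: "Sw (d # w) x = (Sw w 0 + x / 3 ^ length w + real d) / 3" .
  have B: "Sw (d # w) 0 = (Sw w 0 + real d) / 3" by (simp add: Sd_def)
  show ?case by (simp only: A B length_Cons power_Suc) (simp add: field_simps)
qed simp

lemma Sw_inj: "inj (Sw w)"
  by (rule injI) (subst (asm) (1 2) Sw_affine, simp)

lemma Sw_image_eq: "Sw w ` B = (\<lambda>y. (y - Sw w 0) * 3 ^ length w) -` B"
proof -
  have "Sw w ((y - Sw w 0) * 3 ^ length w) = y" for y by (subst Sw_affine) simp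
  moreover have "(Sw w x - Sw w 0) * 3 ^ length w = x" for x by (subst Sw_affine) simp
  ultimately show ?thesis by (auto intro!: image_eqI)
qed

lemma Sw_image_borel: "B \<in> sets borel \<Longrightarrow> Sw w ` B \<in> sets borel"
proof -
  have "continuous_on UNIV (\<lambda>y::real. (y - Sw w 0) * 3 ^ length w)" by (intro continuous_intros)
  then have "(\<lambda>y::real. (y - Sw w 0) * 3 ^ length w) \<in> borel_measurable borel"
    by (rule borel_measurable_continuous_onI)
  moreover assume "B \<in> sets borel"
  ultimately show ?thesis unfolding Sw_image_eq by (rule measurable_sets_borel)
qed

lemma Sd_image_eq: "Sd d ` B = Sw [d] ` B" by simp

lemma words_eq_0: "words_eq 0 = {[]}" by (auto simp: words_eq_def)

lemma words_eq_Suc: "words_eq (Suc n) = (\<lambda>w. 0 # w) ` words_eq n \<union> (\<lambda>w. 2 # w) ` words_eq n"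
proof
  show "words_eq (Suc n) \<subseteq> (\<lambda>w. 0 # w) ` words_eq n \<union> (\<lambda>w. 2 # w) ` words_eq n"
  proof
    fix u assume "u \<in> words_eq (Suc n)"
    then obtain d w where "u = d # w" "length w = n" "d \<in> {0,2}" "set w \<subseteq> {0,2}"
      unfolding words_eq_def by (cases u) auto
    then show "u \<in> (\<lambda>w. 0 # w) ` words_eq n \<union> (\<lambda>w. 2 # w) ` words_eq n"
      by (auto simp: words_eq_def)
  qed
qed (auto simp: words_eq_def)

lemma finite_words_eq: "finite (words_eq n)"
  by (induction n) (auto simp: words_eq_0 words_eq_Suc)

lemma words_le_eq: "words_le m = (\<Union>n\<le>m. words_eq n)"
  by (auto simp: words_le_def words_eq_def)

lemma finite_words_le: "finite (words_le m)"
  unfolding words_le_eq using finite_words_eq by blast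

lemma words_eq_length: "u \<in> words_eq n \<Longrightarrow> length u = n" by (simp add: words_eq_def)

lemma sum_words_Suc:
  "(\<Sum>u\<in>words_eq (Suc n). f u) = (\<Sum>w\<in>words_eq n. f (0 # w)) + (\<Sum>w\<in>words_eq n. f (2 # w))"
proof -
  have "(\<Sum>u\<in>words_eq (Suc n). f u) = (\<Sum>u\<in>(\<lambda>w. 0 # w) ` words_eq n. f u) + (\<Sum>u\<in>(\<lambda>w. 2 # w) ` words_eq n. f u)"
    unfolding words_eq_Suc by (rule sum.union_disjoint) (auto simp: finite_words_eq)
  also have "\<dots> = (\<Sum>w\<in>words_eq n. f (0 # w)) + (\<Sum>w\<in>words_eq n. f (2 # w))"
    by (subst (1 2) sum.reindex) (auto simp: inj_on_def)
  finally show ?thesis .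
qed

lemma sum_words_le:
  "(\<Sum>u\<in>words_le m. f u) = (\<Sum>n\<le>m. \<Sum>u\<in>words_eq n. f u)"
  unfolding words_le_eq
proof (rule sum.UNION_disjoint)
  show "\<forall>i\<in>{..m}. \<forall>j\<in>{..m}. i \<noteq> j \<longrightarrow> words_eq i \<inter> words_eq j = {}"
    by (auto simp: words_eq_def)
qed (auto simp: finite_words_eq)

definition En :: "nat \<Rightarrow> real set" where "En n = (\<Union>w\<in>words_eq n. Sw w ` {0..1})"

lemma En_0: "En 0 = {0..1}" by (simp add: En_def words_eq_0)
lemma En_Suc: "En (Suc n) = Sd 0 ` En n \<union> Sd 2 ` En n"
  unfolding En_def words_eq_Suc by (auto simp: image_comp)

lemma En_borel: "En n \<in> sets borel"
  unfolding En_def by (intro sets.finite_UN finite_words_eq Sw_image_borel) auto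

lemma cantor_En: "cantor = (\<Inter>n. En n)" by (simp add: cantor_def En_def)

lemma cantor_borel: "cantor \<in> sets borel"
  unfolding cantor_En by (rule sets.countable_INT') (auto simp: En_borel)

lemma Cw_borel: "Cw w \<in> sets borel"
  unfolding Cw_def by (intro Sw_image_borel cantor_borel)

lemma Sd_01: "d \<in> {0,2} \<Longrightarrow> x \<in> {0..1} \<Longrightarrow> Sd d x \<in> {0..1}"
  by (auto simp: Sd_def)

lemma En_01: "En n \<subseteq> {0..1}"
  by (induction n) (auto simp: En_0 En_Suc Sd_def)

lemma cantor_01: "cantor \<subseteq> {0..1}" using En_01[of 0] unfolding cantor_En by auto

lemma Sd_cantor: "d \<in> {0,2} \<Longrightarrow> Sd d ` cantor \<subseteq> cantor"
proof
  fix y assume d: "d \<in> {0,2}" and "y \<in> Sd d ` cantor"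
  then obtain x where x: "x \<in> cantor" "y = Sd d x" by auto
  have "y \<in> En n" for n
  proof (cases n)
    case 0 then show ?thesis using x cantor_01 Sd_01[OF d] by (auto simp: En_0)
  next
    case (Suc m)
    then show ?thesis using x d unfolding cantor_En by (auto simp: En_Suc)
  qed
  then show "y \<in> cantor" unfolding cantor_En by auto
qed

lemma Cw_Nil[simp]: "Cw [] = cantor" by (simp add: Cw_def)
lemma Cw_Cons: "Cw (d # w) = Sd d ` Cw w" by (simp add: Cw_def image_comp)

lemma Cw_sub_cantor: "set w \<subseteq> {0,2} \<Longrightarrow> Cw w \<subseteq> cantor"
proof (induction w)
  case (Cons d w)
  then have "Sd d ` Cw w \<subseteq> Sd d ` cantor" by auto
  also have "\<dots> \<subseteq> cantor" using Cons.prems by (intro Sd_cantor) auto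
  finally show ?case by (simp add: Cw_Cons)
qed simp

lemma Cw_01: "set w \<subseteq> {0,2} \<Longrightarrow> Cw w \<subseteq> {0..1}"
  using Cw_sub_cantor cantor_01 by blast

lemma Cw_Cons_0: "set w \<subseteq> {0,2} \<Longrightarrow> Cw (0 # w) \<subseteq> {0..1/3}"
  using Cw_01[of w] by (auto simp: Cw_Cons Sd_def)
lemma Cw_Cons_2: "set w \<subseteq> {0,2} \<Longrightarrow> Cw (2 # w) \<subseteq> {2/3..1}"
  using Cw_01[of w] by (auto simp: Cw_Cons Sd_def)

lemma Sd_inj: "inj (Sd d)" by (rule injI) (simp add: Sd_def)

lemma Cw_disjoint:
  "length u = length v \<Longrightarrow> set u \<subseteq> {0,2} \<Longrightarrow> set v \<subseteq> {0,2} \<Longrightarrow> u \<noteq> v \<Longrightarrow> Cw u \<inter> Cw v = {}"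
proof (induction u arbitrary: v)
  case Nil then show ?case by simp
next
  case (Cons d u)
  then obtain e v' where v: "v = e # v'" by (cases v) auto
  show ?case
  proof (cases "d = e")
    case True
    then have "u \<noteq> v'" using Cons.prems v by auto
    then have "Cw u \<inter> Cw v' = {}" using Cons.IH[of v'] Cons.prems v by simp
    moreover have "Cw (d # u) \<inter> Cw v = Sd d ` (Cw u \<inter> Cw v')"
      using image_Int[OF Sd_inj, of d "Cw u" "Cw v'"] True v by (simp add: Cw_Cons)
    ultimately show ?thesis by simp
  next
    case False
    then have "(d = 0 \<and> e = 2) \<or> (d = 2 \<and> e = 0)" using Cons.prems v by auto
    have e: "{0..1/3} \<inter> {2/3..1::real} = {}" by auto
    have u2: "set u \<subseteq> {0,2}" "set v' \<subseteq> {0,2}" using Cons.prems v by auto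
    from \<open>(d = 0 \<and> e = 2) \<or> (d = 2 \<and> e = 0)\<close> show ?thesis
    proof
      assume "d = 0 \<and> e = 2"
      then have "Cw (d # u) \<inter> Cw v \<subseteq> {0..1/3} \<inter> {2/3..1}"
        using Cw_Cons_0[OF u2(1)] Cw_Cons_2[OF u2(2)] v by blast
      then show ?thesis using e by blast
    next
      assume "d = 2 \<and> e = 0"
      then have "Cw (d # u) \<inter> Cw v \<subseteq> {2/3..1} \<inter> {0..1/3}"
        using Cw_Cons_2[OF u2(1)] Cw_Cons_0[OF u2(2)] v by blast
      then show ?thesis using e by blast
    qed
  qed
qed

lemma Cw_disjoint_eq: "u \<in> words_eq n \<Longrightarrow> v \<in> words_eq n \<Longrightarrow> u \<noteq> v \<Longrightarrow> Cw u \<inter> Cw v = {}"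
  by (rule Cw_disjoint) (auto simp: words_eq_def)

lemma Cw_prefix: "set w \<subseteq> {0,2} \<Longrightarrow> Cw (u @ w) \<subseteq> Cw u"
proof (induction u)
  case Nil then show ?case using Cw_sub_cantor by simp
next
  case (Cons d u) then show ?case by (auto simp: Cw_Cons)
qed




fun wt :: "real \<Rightarrow> nat list \<Rightarrow> real" where
  "wt p [] = 1"
| "wt p (d # w) = (if d = 0 then p else 1 - p) * wt p w"

locale cm =
  fixes p :: real
  assumes p0: "0 < p" and p1: "p < 1"
begin

abbreviation "M \<equiv> mu p"

lemma PM: "Pmu p M" by (rule mu_P[OF p0 p1])

lemma sets_M[simp, measurable_cong]: "sets M = sets borel" using PM by (simp add: Pmu_def)
lemma space_M[simp]: "space M = UNIV" using sets_eq_imp_space_eq[OF sets_M] by simp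
lemma prob_M: "prob_space M" using PM by (simp add: Pmu_def)

sublocale pM: prob_space M by (rule prob_M)

lemma eqM: "A \<in> sets borel \<Longrightarrow> emeasure M A =
          ennreal p * emeasure M (Sd 0 -` A) + ennreal (1 - p) * emeasure M (Sd 2 -` A)"
  using PM by (simp add: Pmu_def)

lemma measure_01: "measure M {0..1} = 1"
  using PM by (simp add: Pmu_def pM.emeasure_eq_measure)

lemma null_outside: assumes "A \<in> sets borel" "A \<inter> {0..1} = {}" shows "measure M A = 0"
proof -
  have "A \<subseteq> space M - {0..1}" using assms by auto
  then have "measure M A \<le> measure M (space M - {0..1})"
    using assms by (intro pM.finite_measure_mono) auto
  also have "\<dots> = 0" using pM.prob_compl[of "{0..1}"] measure_01 by simp
  finally show ?thesis using measure_nonneg[of M A] by linarith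
qed

lemma measure_eq: "A \<in> sets borel \<Longrightarrow> measure M A =
          p * measure M (Sd 0 -` A) + (1 - p) * measure M (Sd 2 -` A)"
proof -
  assume A: "A \<in> sets borel"
  have "ennreal (measure M A) = ennreal p * ennreal (measure M (Sd 0 -` A)) + ennreal (1-p) * ennreal (measure M (Sd 2 -` A))"
    using eqM[OF A] by (simp add: pM.emeasure_eq_measure)
  also have "\<dots> = ennreal (p * measure M (Sd 0 -` A) + (1-p) * measure M (Sd 2 -` A))"
    using p0 p1 by (simp add: ennreal_mult'' ennreal_plus)
  finally show ?thesis by (subst (asm) ennreal_inj) (use p0 p1 in auto)
qed

lemma Sd_vimage_borel: "A \<in> sets borel \<Longrightarrow> Sd d -` A \<in> sets borel"
  using measurable_sets_borel[OF Sd_measurable] by simp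

definition pw :: "nat \<Rightarrow> real" where "pw d = (if d = 0 then p else 1 - p)"

lemma measure_Sd_image:
  assumes B: "B \<in> sets borel" "B \<subseteq> {0..1}" and d: "d \<in> {0,2}"
  shows "measure M (Sd d ` B) = pw d * measure M B"
proof -
  have SB: "Sd d ` B \<in> sets borel" using Sw_image_borel[OF B(1), of "[d]"] by simp
  have same: "Sd d -` (Sd d ` B) = B" using Sd_inj by (simp add: inj_vimage_image_eq)
  have other: "measure M (Sd e -` (Sd d ` B)) = 0" if "e \<in> {0,2}" "e \<noteq> d" for e
  proof (rule null_outside)
    show "Sd e -` Sd d ` B \<in> sets borel" by (rule Sd_vimage_borel[OF SB])
    show "Sd e -` Sd d ` B \<inter> {0..1} = {}"
    proof (rule ccontr)
      assume "Sd e -` Sd d ` B \<inter> {0..1} \<noteq> {}"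
      then obtain x b where x: "x \<in> {0..1}" "b \<in> B" "Sd e x = Sd d b" by blast
      then have "b \<in> {0..1}" using B by auto
      then show False using x that d by (auto simp: Sd_def)
    qed
  qed
  show ?thesis
  proof (cases "d = 0")
    case True
    then show ?thesis using measure_eq[OF SB] same other[of 2] by (simp add: pw_def)
  next
    case False
    then have "d = 2" using d by auto
    then show ?thesis using measure_eq[OF SB] same other[of 0] by (simp add: pw_def)
  qed
qed

lemma measure_En: "measure M (En n) = 1"
proof (induction n)
  case 0 then show ?case using measure_01 by (simp add: En_0)
next
  case (Suc n)
  have b: "\<forall>x\<in>En n. 0 \<le> x \<and> x \<le> 1" using En_01[of n] by auto
  have disj: "Sd 0 ` En n \<inter> Sd 2 ` En n = {}"
  proof (rule ccontr)
    assume "Sd 0 ` En n \<inter> Sd 2 ` En n \<noteq> {}"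
    then obtain x y where xy: "x \<in> En n" "y \<in> En n" "Sd 0 x = Sd 2 y" by blast
    then have "x \<le> 1" "0 \<le> y" using b by auto
    moreover have "x = y + 2" using xy(3) by (simp add: Sd_def)
    ultimately show False by simp
  qed
  have "measure M (En (Suc n)) = measure M (Sd 0 ` En n) + measure M (Sd 2 ` En n)"
    unfolding En_Suc
    by (rule pM.finite_measure_Union) (use Sw_image_borel[OF En_borel, of "[_]"] disj in auto)
  also have "\<dots> = p * 1 + (1-p) * 1"
    using measure_Sd_image[OF En_borel En_01, of 0 n] measure_Sd_image[OF En_borel En_01, of 2 n] Suc
    by (simp add: pw_def)
  finally show ?case by simp
qed

lemma measure_cantor: "measure M cantor = 1"
proof -
  have "UNIV - En n \<in> null_sets M" for n
    using pM.prob_compl[of "En n"] measure_En[of n] En_borel[of n]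
    by (simp add: null_sets_def pM.emeasure_eq_measure)
  then have "(\<Union>n. UNIV - En n) \<in> null_sets M" by (rule null_sets_UN)
  moreover have "(\<Union>n. UNIV - En n) = UNIV - cantor" by (auto simp: cantor_En)
  ultimately have "measure M (UNIV - cantor) = 0" by (simp add: null_sets_def pM.emeasure_eq_measure)
  then show ?thesis using pM.prob_compl[of cantor] cantor_borel by simp
qed

lemma measure_Cw: "set u \<subseteq> {0,2} \<Longrightarrow> measure M (Cw u) = wt p u"
proof (induction u)
  case Nil then show ?case using measure_cantor by simp
next
  case (Cons d u)
  then have "measure M (Cw (d # u)) = pw d * measure M (Cw u)"
    unfolding Cw_Cons by (intro measure_Sd_image Cw_borel Cw_01) auto
  then show ?case using Cons by (simp add: pw_def)
qed

end



lemma quad_disc: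
  fixes a b c :: real
  assumes H: "\<And>t. 0 \<le> a - 2*b*t + c*t\<^sup>2" and c0: "0 \<le> c"
  shows "b\<^sup>2 \<le> a * c"
proof -
  show ?thesis
  proof (cases "c = 0")
    case True
    then have "0 \<le> a - 2*b*t" for t using H[of t] by simp
    then have h: "0 \<le> a - 2*b*t" for t by blast
    have "b = 0"
    proof (rule ccontr)
      assume b: "b \<noteq> 0"
      have "a - 2*b*((a+1)/(2*b)) = -1" using b by (simp add: field_simps)
      then show False using h[of "(a+1)/(2*b)"] by simp
    qed
    then show ?thesis using H[of 0] True by simp
  next
    case False
    then have c: "c > 0" using c0 by simp
    have "0 \<le> a - 2*b*(b/c) + c*(b/c)\<^sup>2" by (rule H)
    also have "\<dots> = a - b\<^sup>2 / c" using c by (simp add: power2_eq_square field_simps)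
    finally show ?thesis using c by (simp add: field_simps)
  qed
qed

lemma two_ab: "2 * a * b \<le> a\<^sup>2 + (b::real)\<^sup>2"
proof -
  have "0 \<le> (a - b)\<^sup>2" by simp
  then show ?thesis by (simp add: power2_diff)
qed

lemma ab_le: "a * b \<le> a\<^sup>2 + (b::real)\<^sup>2"
  using two_ab[of a b] zero_le_power2[of a] zero_le_power2[of b] by linarith

lemma cnj_measurable[measurable]:
  "f \<in> borel_measurable N \<Longrightarrow> (\<lambda>x. cnj (f x)) \<in> borel_measurable N"
proof -
  have "continuous_on UNIV (\<lambda>z::complex. cnj z)" by (intro continuous_on_cnj continuous_on_id)
  then have "(\<lambda>z::complex. cnj z) \<in> borel_measurable borel" by (rule borel_measurable_continuous_onI)
  moreover assume "f \<in> borel_measurable N"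
  ultimately show ?thesis using measurable_compose by blast
qed

context cm
begin

definition nsq :: "(real \<Rightarrow> complex) \<Rightarrow> real" where
  "nsq f = (\<integral>x. (cmod (f x))\<^sup>2 \<partial>M)"

lemma L2norm_nsq: "L2norm p f = sqrt (nsq f)" by (simp add: L2norm_def nsq_def)

lemma nsq_nonneg: "0 \<le> nsq f" unfolding nsq_def by simp

lemma L2_meas: "L2 p f \<Longrightarrow> f \<in> borel_measurable borel"
  unfolding L2_def using measurable_cong_sets[OF sets_M refl] by auto

lemma L2_sq_int: "L2 p f \<Longrightarrow> integrable M (\<lambda>x. (cmod (f x))\<^sup>2)" by (simp add: L2_def)

lemma integrable_bounded_mult:
  fixes g :: "real \<Rightarrow> 'a::{real_normed_field, banach, second_countable_topology}"
  assumes g: "integrable M g" and h: "h \<in> borel_measurable borel" and B: "\<And>x. norm (h x) \<le> B"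
  shows "integrable M (\<lambda>x. h x * g x)"
proof (rule Bochner_Integration.integrable_bound)
  show "integrable M (\<lambda>x. B * norm (g x))" using g by simp
  show "(\<lambda>x. h x * g x) \<in> borel_measurable M" using h borel_measurable_integrable[OF g] by simp
  show "AE x in M. norm (h x * g x) \<le> norm (B * norm (g x))"
  proof (intro AE_I2)
    fix x
    have "norm (h x * g x) \<le> B * norm (g x)" by (simp add: norm_mult mult_right_mono B)
    also have "\<dots> \<le> norm (B * norm (g x))" by simp
    finally show "norm (h x * g x) \<le> norm (B * norm (g x))" .
  qed
qed

lemma L2_int: assumes "L2 p f" shows "integrable M f"
proof (rule Bochner_Integration.integrable_bound)
  show "integrable M (\<lambda>x. 1 + (cmod (f x))\<^sup>2)" using L2_sq_int[OF assms] by simp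
  show "f \<in> borel_measurable M" using assms by (simp add: L2_def)
  show "AE x in M. norm (f x) \<le> norm (1 + (cmod (f x))\<^sup>2)"
  proof (intro AE_I2)
    fix x
    have "cmod (f x) \<le> 1 + (cmod (f x))\<^sup>2"
      using ab_le[of "cmod (f x)" 1] by simp
    then show "norm (f x) \<le> norm (1 + (cmod (f x))\<^sup>2)" by simp
  qed
qed

lemma L2_prod: assumes f: "L2 p f" and g: "L2 p g" shows "integrable M (\<lambda>x. cnj (f x) * g x)"
proof (rule Bochner_Integration.integrable_bound)
  show "integrable M (\<lambda>x. (cmod (f x))\<^sup>2 + (cmod (g x))\<^sup>2)" using L2_sq_int[OF f] L2_sq_int[OF g] by simp
  have [measurable]: "f \<in> borel_measurable borel" "g \<in> borel_measurable borel" using f g by (auto dest: L2_meas)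
  show "(\<lambda>x. cnj (f x) * g x) \<in> borel_measurable M" by measurable
  show "AE x in M. norm (cnj (f x) * g x) \<le> norm ((cmod (f x))\<^sup>2 + (cmod (g x))\<^sup>2)"
  proof (intro AE_I2)
    fix x
    have "cmod (f x) * cmod (g x) \<le> (cmod (f x))\<^sup>2 + (cmod (g x))\<^sup>2"
      by (rule ab_le)
    then show "norm (cnj (f x) * g x) \<le> norm ((cmod (f x))\<^sup>2 + (cmod (g x))\<^sup>2)" by (simp add: norm_mult)
  qed
qed

lemma L2_bounded:
  assumes "f \<in> borel_measurable borel" "\<And>x. cmod (f x) \<le> B"
  shows "L2 p f"
  unfolding L2_def
proof
  show "f \<in> borel_measurable M" using assms(1) by simp
  show "integrable M (\<lambda>x. (cmod (f x))\<^sup>2)"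
  proof (rule Bochner_Integration.integrable_bound)
    show "integrable M (\<lambda>x. B\<^sup>2)" by simp
    show "(\<lambda>x. (cmod (f x))\<^sup>2) \<in> borel_measurable M" using assms(1) by simp
    show "AE x in M. norm ((cmod (f x))\<^sup>2) \<le> norm (B\<^sup>2)"
      using assms(2) by (intro AE_I2) (simp add: power_mono)
  qed
qed

lemma L2_add: assumes f: "L2 p f" and g: "L2 p g" shows "L2 p (\<lambda>x. f x + g x)"
  unfolding L2_def
proof
  have [measurable]: "f \<in> borel_measurable borel" "g \<in> borel_measurable borel" using f g by (auto dest: L2_meas)
  show "(\<lambda>x. f x + g x) \<in> borel_measurable M" by measurable
  show "integrable M (\<lambda>x. (cmod (f x + g x))\<^sup>2)"
  proof (rule Bochner_Integration.integrable_bound)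
    show "integrable M (\<lambda>x. 2 * (cmod (f x))\<^sup>2 + 2 * (cmod (g x))\<^sup>2)" using L2_sq_int[OF f] L2_sq_int[OF g] by simp
    show "(\<lambda>x. (cmod (f x + g x))\<^sup>2) \<in> borel_measurable M" by measurable
    show "AE x in M. norm ((cmod (f x + g x))\<^sup>2) \<le> norm (2 * (cmod (f x))\<^sup>2 + 2 * (cmod (g x))\<^sup>2)"
    proof (intro AE_I2)
      fix x
      have "cmod (f x + g x) \<le> cmod (f x) + cmod (g x)" by (rule norm_triangle_ineq)
      then have "(cmod (f x + g x))\<^sup>2 \<le> (cmod (f x) + cmod (g x))\<^sup>2" by (simp add: power_mono)
      also have "\<dots> \<le> 2 * (cmod (f x))\<^sup>2 + 2 * (cmod (g x))\<^sup>2"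
        using two_ab[of "cmod (f x)" "cmod (g x)"] by (simp add: power2_sum)
      finally show "norm ((cmod (f x + g x))\<^sup>2) \<le> norm (2 * (cmod (f x))\<^sup>2 + 2 * (cmod (g x))\<^sup>2)" by simp
    qed
  qed
qed

lemma L2_scale: assumes f: "L2 p f" shows "L2 p (\<lambda>x. a * f x)"
  using f unfolding L2_def by (auto simp: norm_mult power_mult_distrib intro: borel_measurable_times)

lemma L2_diff: assumes f: "L2 p f" and g: "L2 p g" shows "L2 p (\<lambda>x. f x - g x)"
  using L2_add[OF f L2_scale[OF g, of "-1"]] by simp

lemma CS_real:
  fixes g h :: "real \<Rightarrow> real"
  assumes gm: "g \<in> borel_measurable borel" and hm: "h \<in> borel_measurable borel"
    and gi: "integrable M (\<lambda>x. (g x)\<^sup>2)" and hi: "integrable M (\<lambda>x. (h x)\<^sup>2)"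
  shows "(\<integral>x. g x * h x \<partial>M)\<^sup>2 \<le> (\<integral>x. (g x)\<^sup>2 \<partial>M) * (\<integral>x. (h x)\<^sup>2 \<partial>M)"
proof (rule quad_disc)
  show "0 \<le> (\<integral>x. (h x)\<^sup>2 \<partial>M)" by simp
  fix t :: real
  have gh: "integrable M (\<lambda>x. g x * h x)"
  proof (rule Bochner_Integration.integrable_bound)
    show "integrable M (\<lambda>x. (g x)\<^sup>2 + (h x)\<^sup>2)" using gi hi by simp
    show "(\<lambda>x. g x * h x) \<in> borel_measurable M" using gm hm by simp
    show "AE x in M. norm (g x * h x) \<le> norm ((g x)\<^sup>2 + (h x)\<^sup>2)"
      using ab_le[of "\<bar>g _\<bar>" "\<bar>h _\<bar>"] by (intro AE_I2) (simp add: abs_mult)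
  qed
  have "0 \<le> (\<integral>x. (g x - t * h x)\<^sup>2 \<partial>M)" by simp
  also have "(\<integral>x. (g x - t * h x)\<^sup>2 \<partial>M) = (\<integral>x. (g x)\<^sup>2 - 2 * t * (g x * h x) + t\<^sup>2 * (h x)\<^sup>2 \<partial>M)"
    by (simp add: power2_diff power_mult_distrib algebra_simps)
  also have "\<dots> = (\<integral>x. (g x)\<^sup>2 - 2 * t * (g x * h x) \<partial>M) + (\<integral>x. t\<^sup>2 * (h x)\<^sup>2 \<partial>M)"
    by (rule Bochner_Integration.integral_add) (use gi gh hi in auto)
  also have "(\<integral>x. (g x)\<^sup>2 - 2 * t * (g x * h x) \<partial>M) = (\<integral>x. (g x)\<^sup>2 \<partial>M) - (\<integral>x. 2 * t * (g x * h x) \<partial>M)"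
    by (rule Bochner_Integration.integral_diff) (use gi gh in auto)
  also have "(\<integral>x. 2 * t * (g x * h x) \<partial>M) = 2 * t * (\<integral>x. g x * h x \<partial>M)" by simp
  also have "(\<integral>x. t\<^sup>2 * (h x)\<^sup>2 \<partial>M) = t\<^sup>2 * (\<integral>x. (h x)\<^sup>2 \<partial>M)" by simp
  finally show "0 \<le> (\<integral>x. (g x)\<^sup>2 \<partial>M) - 2 * (\<integral>x. g x * h x \<partial>M) * t + (\<integral>x. (h x)\<^sup>2 \<partial>M) * t\<^sup>2"
    by (simp add: algebra_simps)
qed
lemma DUMMY: "True" proof -
  show True by simp
qed

definition cf :: "(real \<Rightarrow> complex) \<Rightarrow> nat list \<Rightarrow> complex" where
  "cf f u = inner_mu p (ind (Cw u)) f"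

lemma cf_eq: "cf f u = (\<integral>x. indicator (Cw u) x * f x \<partial>M)"
  unfolding cf_def inner_mu_def ind_def
  by (rule Bochner_Integration.integral_cong) (auto simp: indicator_def)

lemma cf_bound:
  assumes f: "L2 p f" and u: "set u \<subseteq> {0,2}"
  shows "cmod (cf f u) \<le> sqrt (wt p u) * sqrt (nsq f)"
proof -
  have "cmod (cf f u) \<le> (\<integral>x. cmod (indicator (Cw u) x * f x) \<partial>M)"
    unfolding cf_eq by (rule integral_norm_bound)
  also have "\<dots> = (\<integral>x. indicator (Cw u) x * cmod (f x) \<partial>M)"
    by (rule Bochner_Integration.integral_cong) (auto simp: indicator_def)
  finally have a: "cmod (cf f u) \<le> (\<integral>x. indicator (Cw u) x * cmod (f x) \<partial>M)" .
  have fm: "(\<lambda>x. cmod (f x)) \<in> borel_measurable borel" using L2_meas[OF f] by simp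
  have im: "(indicator (Cw u) :: real \<Rightarrow> real) \<in> borel_measurable borel"
    using Cw_borel by simp
  have "(\<integral>x. indicator (Cw u) x * cmod (f x) \<partial>M)\<^sup>2 \<le> (\<integral>x. (indicator (Cw u) x)\<^sup>2 \<partial>M) * (\<integral>x. (cmod (f x))\<^sup>2 \<partial>M)"
  proof (rule CS_real[OF im fm])
    have "(\<lambda>x. (indicator (Cw u) x :: real)\<^sup>2) = indicator (Cw u)" by (auto simp: indicator_def fun_eq_iff)
    moreover have "integrable M (indicator (Cw u) :: real \<Rightarrow> real)"
      using Cw_borel[of u] pM.emeasure_finite[of "Cw u"] by (intro integrable_real_indicator) (simp_all add: less_top[symmetric])
    ultimately show "integrable M (\<lambda>x. (indicator (Cw u) x :: real)\<^sup>2)" by simp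
    show "integrable M (\<lambda>x. (cmod (f x))\<^sup>2)" by (rule L2_sq_int[OF f])
  qed
  also have "(\<integral>x. (indicator (Cw u) x)\<^sup>2 \<partial>M) = wt p u"
  proof -
    have "(\<integral>x. (indicator (Cw u) x :: real)\<^sup>2 \<partial>M) = (\<integral>x. indicator (Cw u) x \<partial>M)"
      by (rule Bochner_Integration.integral_cong) (auto simp: indicator_def)
    also have "\<dots> = measure M (Cw u)" by simp
    finally show ?thesis using measure_Cw[OF u] by simp
  qed
  finally have b: "(\<integral>x. indicator (Cw u) x * cmod (f x) \<partial>M)\<^sup>2 \<le> wt p u * nsq f" by (simp add: nsq_def)
  have "(\<integral>x. indicator (Cw u) x * cmod (f x) \<partial>M) \<le> sqrt (wt p u * nsq f)"
    using real_le_rsqrt[OF b] .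
  then show ?thesis using a by (simp add: real_sqrt_mult)
qed

end



context cm
begin

definition rr :: real where "rr = max p (1 - p)"
definition rho :: real where "rho = sqrt rr"

lemma rr_bounds: "0 < rr" "rr < 1" using p0 p1 by (auto simp: rr_def)
lemma rho_bounds: "0 < rho" "rho < 1" using rr_bounds by (auto simp: rho_def)

lemma wt_nonneg: "0 \<le> wt p u"
  by (induction u) (use p0 p1 in auto)

lemma wt_bound: "wt p u \<le> rr ^ length u"
proof (induction u)
  case (Cons d u)
  have "(if d = 0 then p else 1 - p) \<le> rr" by (auto simp: rr_def)
  then have "(if d = 0 then p else 1 - p) * wt p u \<le> rr * rr ^ length u"
    using Cons wt_nonneg[of u] p0 p1 rr_bounds by (intro mult_mono) auto
  then show ?case by simp
qed simp

lemma sqrt_wt_bound: "sqrt (wt p u) \<le> rho ^ length u"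
  unfolding rho_def real_sqrt_power[symmetric] using wt_bound by simp

lemma Cw_borel'[measurable]: "Cw u \<in> sets borel" by (rule Cw_borel)

lemma ind_sum_le: "(\<Sum>u\<in>words_eq n. indicator (Cw u) x :: real) \<le> 1"
proof (cases "\<exists>u0\<in>words_eq n. x \<in> Cw u0")
  case True
  then obtain u0 where u0: "u0 \<in> words_eq n" "x \<in> Cw u0" by blast
  have "(\<Sum>u\<in>words_eq n. indicator (Cw u) x :: real) = (\<Sum>u\<in>words_eq n. if u = u0 then 1 else 0)"
  proof (rule sum.cong)
    fix u assume u: "u \<in> words_eq n"
    show "(indicator (Cw u) x :: real) = (if u = u0 then 1 else 0)"
    proof (cases "u = u0")
      case False
      then have "x \<notin> Cw u" using Cw_disjoint_eq[OF u u0(1)] u0(2) by blast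
      then show ?thesis using False by simp
    qed (use u0 in simp)
  qed simp
  also have "\<dots> = 1" using u0(1) finite_words_eq by simp
  finally show ?thesis by simp
next
  case False
  then have "(\<Sum>u\<in>words_eq n. indicator (Cw u) x :: real) = 0" by (intro sum.neutral) auto
  then show ?thesis by simp
qed

definition levA :: "(nat list \<Rightarrow> complex) \<Rightarrow> nat \<Rightarrow> real \<Rightarrow> complex" where
  "levA a n x = (\<Sum>u\<in>words_eq n. a u * ind (Cw u) x)"

definition SerA :: "(nat list \<Rightarrow> complex) \<Rightarrow> real \<Rightarrow> complex" where
  "SerA a x = (\<Sum>n. levA a n x)"

definition decay :: "real \<Rightarrow> (nat list \<Rightarrow> complex) \<Rightarrow> bool" where
  "decay B a \<longleftrightarrow> (\<forall>n. \<forall>u\<in>words_eq n. cmod (a u) \<le> B * rho ^ n)"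

lemma levA_bound:
  assumes "\<And>u. u \<in> words_eq n \<Longrightarrow> cmod (a u) \<le> C" and "0 \<le> C"
  shows "cmod (levA a n x) \<le> C"
proof -
  have "cmod (levA a n x) \<le> (\<Sum>u\<in>words_eq n. cmod (a u * ind (Cw u) x))"
    unfolding levA_def by (rule norm_sum)
  also have "\<dots> \<le> (\<Sum>u\<in>words_eq n. C * indicator (Cw u) x)"
    using assms by (intro sum_mono) (auto simp: ind_def indicator_def)
  also have "\<dots> = C * (\<Sum>u\<in>words_eq n. indicator (Cw u) x)" by (simp add: sum_distrib_left)
  also have "\<dots> \<le> C * 1" using ind_sum_le assms(2) by (intro mult_left_mono) auto
  finally show ?thesis by simp
qed

lemma decay_B: "decay B a \<Longrightarrow> 0 \<le> B"
proof -
  assume d: "decay B a"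
  have "[] \<in> words_eq 0" by (simp add: words_eq_def)
  then have "cmod (a []) \<le> B" using d unfolding decay_def by fastforce
  then show "0 \<le> B" using norm_ge_zero order.trans by blast
qed

lemma levA_decay: "decay B a \<Longrightarrow> cmod (levA a n x) \<le> B * rho ^ n"
  using decay_B[of B a] rho_bounds by (intro levA_bound) (auto simp: decay_def)

lemma geom_rho: "summable (\<lambda>n. rho ^ n)" using rho_bounds by (intro summable_geometric) auto

lemma summable_levA: "decay B a \<Longrightarrow> summable (\<lambda>n. levA a n x)"
  by (rule summable_comparison_test'[where g="\<lambda>n. B * rho ^ n"])
     (use rho_bounds in \<open>auto intro: summable_mult geom_rho levA_decay\<close>)

lemma tail_bound:
  assumes "decay B a"
  shows "cmod (SerA a x - (\<Sum>n<m. levA a n x)) \<le> B * rho ^ m / (1 - rho)"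
proof -
  have s: "summable (\<lambda>n. levA a n x)" by (rule summable_levA[OF assms])
  have eq: "SerA a x - (\<Sum>n<m. levA a n x) = (\<Sum>n. levA a (n + m) x)"
    unfolding SerA_def using suminf_split_initial_segment[OF s, of m] by simp
  have g: "summable (\<lambda>n. B * rho ^ m * rho ^ n)" by (intro summable_mult geom_rho)
  have bnd: "cmod (levA a (n + m) x) \<le> B * rho ^ m * rho ^ n" for n
    using levA_decay[OF assms, of "n + m" x] by (simp add: power_add mult_ac)
  have sn: "summable (\<lambda>n. cmod (levA a (n + m) x))"
    by (rule summable_comparison_test'[OF g]) (use bnd in auto)
  have "cmod (\<Sum>n. levA a (n + m) x) \<le> (\<Sum>n. cmod (levA a (n + m) x))" by (rule summable_norm[OF sn])
  also have "\<dots> \<le> (\<Sum>n. B * rho ^ m * rho ^ n)" by (rule suminf_le[OF bnd sn g])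
  also have "\<dots> = B * rho ^ m * (\<Sum>n. rho ^ n)" by (rule suminf_mult[OF geom_rho])
  also have "\<dots> = B * rho ^ m / (1 - rho)" using rho_bounds by (simp add: suminf_geometric)
  finally show ?thesis using eq by simp
qed

lemma SerA_bound: "decay B a \<Longrightarrow> cmod (SerA a x) \<le> B / (1 - rho)"
  using tail_bound[of B a x 0] by simp

lemma levA_measurable[measurable]: "levA a n \<in> borel_measurable borel"
  unfolding levA_def[abs_def] ind_def by measurable

lemma SerA_measurable[measurable]: "SerA a \<in> borel_measurable borel"
  unfolding SerA_def[abs_def] by (intro borel_measurable_suminf levA_measurable)

lemma SerA_L2: "decay B a \<Longrightarrow> L2 p (SerA a)"
  by (rule L2_bounded[OF SerA_measurable SerA_bound])

lemma levA_add: "levA (\<lambda>u. a u + b u) n x = levA a n x + levA b n x"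
  unfolding levA_def by (simp add: distrib_right sum.distrib)

lemma levA_scale: "levA (\<lambda>u. c * a u) n x = c * levA a n x"
  unfolding levA_def by (simp add: sum_distrib_left mult.assoc)

lemma decay_add: "decay A a \<Longrightarrow> decay B b \<Longrightarrow> decay (A + B) (\<lambda>u. a u + b u)"
  unfolding decay_def
proof (intro allI ballI)
  fix n u assume a: "\<forall>n. \<forall>u\<in>words_eq n. cmod (a u) \<le> A * rho ^ n"
    and b: "\<forall>n. \<forall>u\<in>words_eq n. cmod (b u) \<le> B * rho ^ n" and u: "u \<in> words_eq n"
  have "cmod (a u + b u) \<le> cmod (a u) + cmod (b u)" by (rule norm_triangle_ineq)
  also have "\<dots> \<le> A * rho ^ n + B * rho ^ n" using a b u by (intro add_mono) auto
  finally show "cmod (a u + b u) \<le> (A + B) * rho ^ n" by (simp add: algebra_simps)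
qed

lemma decay_scale: "decay A a \<Longrightarrow> decay (cmod c * A) (\<lambda>u. c * a u)"
  unfolding decay_def by (auto simp: norm_mult mult.assoc intro: mult_left_mono)

lemma SerA_add: "decay A a \<Longrightarrow> decay B b \<Longrightarrow> SerA (\<lambda>u. a u + b u) x = SerA a x + SerA b x"
  unfolding SerA_def levA_add by (rule suminf_add[symmetric]) (auto intro: summable_levA)

lemma SerA_scale: "decay A a \<Longrightarrow> SerA (\<lambda>u. c * a u) x = c * SerA a x"
  unfolding SerA_def levA_scale by (rule suminf_mult) (auto intro: summable_levA)

lemma SerA_diff: "decay A a \<Longrightarrow> decay B b \<Longrightarrow> SerA (\<lambda>u. a u - b u) x = SerA a x - SerA b x"
  using SerA_add[of A a "cmod (-1) * B" "\<lambda>u. (-1) * b u" x] decay_scale[of B b "-1"] SerA_scale[of B b "-1" x]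
  by simp

lemma decay_diff: "decay A a \<Longrightarrow> decay B b \<Longrightarrow> decay (A + B) (\<lambda>u. a u - b u)"
  using decay_add[of A a "cmod (-1) * B" "\<lambda>u. (-1) * b u"] decay_scale[of B b "-1"] by simp

lemma SerA_close:
  assumes a: "decay A a" and b: "decay B b"
  shows "cmod (SerA a x - SerA b x) \<le> (\<Sum>n<m. \<Sum>u\<in>words_eq n. cmod (a u - b u)) + (A + B) * rho ^ m / (1 - rho)"
proof -
  have d: "decay (A + B) (\<lambda>u. a u - b u)" by (rule decay_diff[OF a b])
  have "SerA a x - SerA b x = SerA (\<lambda>u. a u - b u) x" using SerA_diff[OF a b] by simp
  also have "\<dots> = (\<Sum>n<m. levA (\<lambda>u. a u - b u) n x) + (SerA (\<lambda>u. a u - b u) x - (\<Sum>n<m. levA (\<lambda>u. a u - b u) n x))"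
    by simp
  finally have e: "SerA a x - SerA b x = \<dots>" .
  have "cmod (\<Sum>n<m. levA (\<lambda>u. a u - b u) n x) \<le> (\<Sum>n<m. cmod (levA (\<lambda>u. a u - b u) n x))"
    by (rule norm_sum)
  also have "\<dots> \<le> (\<Sum>n<m. \<Sum>u\<in>words_eq n. cmod (a u - b u))"
  proof (rule sum_mono)
    fix n
    have "cmod (levA (\<lambda>u. a u - b u) n x) \<le> (\<Sum>u\<in>words_eq n. cmod ((a u - b u) * ind (Cw u) x))"
      unfolding levA_def by (rule norm_sum)
    also have "\<dots> \<le> (\<Sum>u\<in>words_eq n. cmod (a u - b u))"
      by (intro sum_mono) (auto simp: ind_def indicator_def)
    finally show "cmod (levA (\<lambda>u. a u - b u) n x) \<le> (\<Sum>u\<in>words_eq n. cmod (a u - b u))" .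
  qed
  finally have p1: "cmod (\<Sum>n<m. levA (\<lambda>u. a u - b u) n x) \<le> (\<Sum>n<m. \<Sum>u\<in>words_eq n. cmod (a u - b u))" .
  have p2: "cmod (SerA (\<lambda>u. a u - b u) x - (\<Sum>n<m. levA (\<lambda>u. a u - b u) n x)) \<le> (A + B) * rho ^ m / (1 - rho)"
    by (rule tail_bound[OF d])
  show ?thesis unfolding e using norm_triangle_le[OF add_mono[OF p1 p2]] by simp
qed

definition T0 :: "(real \<Rightarrow> complex) \<Rightarrow> real \<Rightarrow> complex" where
  "T0 f = SerA (cf f)"

lemma decay_cf: assumes f: "L2 p f" shows "decay (sqrt (nsq f)) (cf f)"
  unfolding decay_def
proof (intro allI ballI)
  fix n u assume u: "u \<in> words_eq n"
  then have "set u \<subseteq> {0,2}" "length u = n" by (auto simp: words_eq_def)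
  then have "cmod (cf f u) \<le> sqrt (wt p u) * sqrt (nsq f)" "sqrt (wt p u) \<le> rho ^ n"
    using cf_bound[OF f] sqrt_wt_bound[of u] by auto
  then show "cmod (cf f u) \<le> sqrt (nsq f) * rho ^ n"
    by (metis mult.commute mult_left_mono order_trans real_sqrt_ge_zero nsq_nonneg)
qed

lemma T0_meas[measurable]: "T0 f \<in> borel_measurable borel"
  unfolding T0_def by simp

lemma T0_L2: "L2 p f \<Longrightarrow> L2 p (T0 f)"
  unfolding T0_def by (rule SerA_L2[OF decay_cf])

lemma T0_bound: "L2 p f \<Longrightarrow> cmod (T0 f x) \<le> sqrt (nsq f) / (1 - rho)"
  unfolding T0_def by (rule SerA_bound[OF decay_cf])

lemma ind_int_mult: "L2 p f \<Longrightarrow> integrable M (\<lambda>x. indicator (Cw u) x * f x)"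
  by (rule integrable_bounded_mult[OF L2_int, of f "indicator (Cw u)" 1]) (auto simp: indicator_def)

lemma cf_add: "L2 p f \<Longrightarrow> L2 p g \<Longrightarrow> cf (\<lambda>x. f x + g x) u = cf f u + cf g u"
  unfolding cf_eq by (simp add: distrib_left ind_int_mult)

lemma cf_scale: "cf (\<lambda>x. c * f x) u = c * cf f u"
  unfolding cf_eq by (simp add: mult.left_commute)

lemma cf_diff: "L2 p f \<Longrightarrow> L2 p g \<Longrightarrow> cf (\<lambda>x. f x - g x) u = cf f u - cf g u"
  unfolding cf_eq by (simp add: right_diff_distrib ind_int_mult)

lemma T0_add: assumes f: "L2 p f" and g: "L2 p g" shows "T0 (\<lambda>x. f x + g x) x = T0 f x + T0 g x"
proof -
  have e: "cf (\<lambda>x. f x + g x) = (\<lambda>u. cf f u + cf g u)" by (rule ext) (rule cf_add[OF f g])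
  show ?thesis unfolding T0_def e by (rule SerA_add[OF decay_cf[OF f] decay_cf[OF g]])
qed

lemma T0_scale: assumes f: "L2 p f" shows "T0 (\<lambda>x. c * f x) x = c * T0 f x"
proof -
  have e: "cf (\<lambda>x. c * f x) = (\<lambda>u. c * cf f u)" by (rule ext) (rule cf_scale)
  show ?thesis unfolding T0_def e by (rule SerA_scale[OF decay_cf[OF f]])
qed

lemma T0_diff: assumes f: "L2 p f" and g: "L2 p g" shows "T0 (\<lambda>x. f x - g x) x = T0 f x - T0 g x"
proof -
  have e: "cf (\<lambda>x. f x - g x) = (\<lambda>u. cf f u - cf g u)" by (rule ext) (rule cf_diff[OF f g])
  show ?thesis unfolding T0_def e by (rule SerA_diff[OF decay_cf[OF f] decay_cf[OF g]])
qed

lemma Km_eq: "Km p m f x = (\<Sum>n<Suc m. levA (cf f) n x)"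
  unfolding Km_def levA_def cf_def sum_words_le lessThan_Suc_atMost ..

lemma nsq_le: assumes "g \<in> borel_measurable borel" "\<And>x. cmod (g x) \<le> C" shows "nsq g \<le> C\<^sup>2"
proof -
  have "nsq g \<le> (\<integral>x. C\<^sup>2 \<partial>M)"
    unfolding nsq_def
  proof (rule integral_mono)
    show "integrable M (\<lambda>x. (cmod (g x))\<^sup>2)" using L2_bounded[OF assms] by (simp add: L2_def)
    show "(cmod (g x))\<^sup>2 \<le> C\<^sup>2" for x using assms(2)[of x] by (simp add: power_mono)
  qed simp
  then show ?thesis using pM.prob_space by simp
qed

lemma is_K_inf_T0: "is_K_inf p T0"
  unfolding is_K_inf_def
proof (intro conjI allI impI)
  fix f assume "L2 p f" then show "L2 p (T0 f)" by (rule T0_L2)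
next
  fix \<epsilon> :: real assume e: "\<epsilon> > 0"
  have "(\<lambda>n. rho ^ n) \<longlonglongrightarrow> 0" using rho_bounds by (intro LIMSEQ_power_zero) auto
  moreover have "\<epsilon> * (1 - rho) > 0" using e rho_bounds by simp
  ultimately obtain N where N: "\<And>n. n \<ge> N \<Longrightarrow> rho ^ n < \<epsilon> * (1 - rho)"
    using order_tendstoD(2) eventually_sequentially by metis
  show "\<exists>N. \<forall>m\<ge>N. \<forall>f. L2 p f \<longrightarrow> L2norm p (\<lambda>x. Km p m f x - T0 f x) \<le> \<epsilon> * L2norm p f"
  proof (intro exI allI impI)
    fix m f assume m: "N \<le> m" and f: "L2 p f"
    have pw: "cmod (Km p m f x - T0 f x) \<le> \<epsilon> * sqrt (nsq f)" for x
    proof -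
      have "cmod (Km p m f x - T0 f x) = cmod (SerA (cf f) x - (\<Sum>n<Suc m. levA (cf f) n x))"
        unfolding Km_eq T0_def by (simp add: norm_minus_commute)
      also have "\<dots> \<le> sqrt (nsq f) * rho ^ Suc m / (1 - rho)" by (rule tail_bound[OF decay_cf[OF f]])
      also have "\<dots> \<le> sqrt (nsq f) * (\<epsilon> * (1 - rho)) / (1 - rho)"
        using N[of "Suc m"] m rho_bounds nsq_nonneg[of f] by (intro divide_right_mono mult_left_mono) auto
      also have "\<dots> = \<epsilon> * sqrt (nsq f)" using rho_bounds by simp
      finally show ?thesis .
    qed
    have "(\<lambda>x. Km p m f x - T0 f x) \<in> borel_measurable borel" unfolding Km_eq by measurable
    then have "nsq (\<lambda>x. Km p m f x - T0 f x) \<le> (\<epsilon> * sqrt (nsq f))\<^sup>2" by (rule nsq_le) (rule pw)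
    then have "sqrt (nsq (\<lambda>x. Km p m f x - T0 f x)) \<le> \<epsilon> * sqrt (nsq f)"
      using e by (simp add: real_le_lsqrt real_sqrt_le_iff nsq_nonneg real_le_rsqrt)
    then show "L2norm p (\<lambda>x. Km p m f x - T0 f x) \<le> \<epsilon> * L2norm p f" by (simp add: L2norm_nsq)
  qed
qed

end



context cm
begin

lemma K_inf_is: "is_K_inf p (K_inf p)"
  unfolding K_inf_def by (rule someI[of "is_K_inf p", OF is_K_inf_T0])

lemma nsq_tri:
  assumes a: "L2 p a" and b: "L2 p b" and c: "L2 p c"
  shows "nsq (\<lambda>x. a x - b x) \<le> 2 * nsq (\<lambda>x. a x - c x) + 2 * nsq (\<lambda>x. c x - b x)"
proof -
  have "nsq (\<lambda>x. a x - b x) \<le> (\<integral>x. 2 * (cmod (a x - c x))\<^sup>2 + 2 * (cmod (c x - b x))\<^sup>2 \<partial>M)"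
    unfolding nsq_def
  proof (rule integral_mono)
    show "integrable M (\<lambda>x. (cmod (a x - b x))\<^sup>2)" using L2_diff[OF a b] by (simp add: L2_def)
    show "integrable M (\<lambda>x. 2 * (cmod (a x - c x))\<^sup>2 + 2 * (cmod (c x - b x))\<^sup>2)"
      using L2_diff[OF a c] L2_diff[OF c b] by (simp add: L2_def)
    fix x
    have "cmod (a x - b x) \<le> cmod (a x - c x) + cmod (c x - b x)"
      using norm_triangle_ineq[of "a x - c x" "c x - b x"] by simp
    then have "(cmod (a x - b x))\<^sup>2 \<le> (cmod (a x - c x) + cmod (c x - b x))\<^sup>2" by (simp add: power_mono)
    also have "\<dots> \<le> 2 * (cmod (a x - c x))\<^sup>2 + 2 * (cmod (c x - b x))\<^sup>2"
      using two_ab[of "cmod (a x - c x)" "cmod (c x - b x)"] by (simp add: power2_sum)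
    finally show "(cmod (a x - b x))\<^sup>2 \<le> 2 * (cmod (a x - c x))\<^sup>2 + 2 * (cmod (c x - b x))\<^sup>2" .
  qed
  also have "\<dots> = 2 * nsq (\<lambda>x. a x - c x) + 2 * nsq (\<lambda>x. c x - b x)"
    unfolding nsq_def using L2_diff[OF a c] L2_diff[OF c b] by (simp add: L2_def)
  finally show ?thesis .
qed

lemma nsq_swap: "nsq (\<lambda>x. a x - b x) = nsq (\<lambda>x. b x - a x)"
  unfolding nsq_def by (simp add: norm_minus_commute)

lemma L2norm_le_sq: assumes "L2norm p g \<le> e * L2norm p f" "0 \<le> e" shows "nsq g \<le> e\<^sup>2 * nsq f"
proof -
  have "sqrt (nsq g) \<le> e * sqrt (nsq f)" using assms by (simp add: L2norm_nsq)
  then have "(sqrt (nsq g))\<^sup>2 \<le> (e * sqrt (nsq f))\<^sup>2" by (intro power_mono) (auto simp: nsq_nonneg)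
  then show ?thesis using nsq_nonneg[of g] nsq_nonneg[of f] by (simp add: power_mult_distrib)
qed

lemma Km_L2: assumes f: "L2 p f" shows "L2 p (Km p m f)"
proof -
  have "cmod (Km p m f x) \<le> real (Suc m) * sqrt (nsq f)" for x
  proof -
    have "cmod (Km p m f x) \<le> (\<Sum>n<Suc m. cmod (levA (cf f) n x))" unfolding Km_eq by (rule norm_sum)
    also have "\<dots> \<le> (\<Sum>n<Suc m. sqrt (nsq f))"
    proof (rule sum_mono)
      fix n
      have "cmod (levA (cf f) n x) \<le> sqrt (nsq f) * rho ^ n" by (rule levA_decay[OF decay_cf[OF f]])
      also have "\<dots> \<le> sqrt (nsq f) * 1" using rho_bounds nsq_nonneg[of f] by (intro mult_left_mono power_le_one) auto
      finally show "cmod (levA (cf f) n x) \<le> sqrt (nsq f)" by simp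
    qed
    finally show ?thesis by simp
  qed
  moreover have "Km p m f \<in> borel_measurable borel" unfolding Km_eq[abs_def] by measurable
  ultimately show ?thesis by (intro L2_bounded)
qed

lemma T_eq_T0: assumes f: "L2 p f" shows "AE x in M. K_inf p f x = T0 f x"
proof -
  let ?T = "K_inf p"
  have KT: "is_K_inf p ?T" by (rule K_inf_is)
  have TL: "L2 p (?T f)" using KT f unfolding is_K_inf_def by blast
  have T0L: "L2 p (T0 f)" by (rule T0_L2[OF f])
  have bound: "nsq (\<lambda>x. ?T f x - T0 f x) \<le> 4 * e\<^sup>2 * nsq f" if e: "e > 0" for e
  proof -
    obtain N1 where N1: "\<forall>m\<ge>N1. \<forall>f. L2 p f \<longrightarrow> L2norm p (\<lambda>x. Km p m f x - ?T f x) \<le> e * L2norm p f"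
      using KT e unfolding is_K_inf_def by blast
    obtain N2 where N2: "\<forall>m\<ge>N2. \<forall>f. L2 p f \<longrightarrow> L2norm p (\<lambda>x. Km p m f x - T0 f x) \<le> e * L2norm p f"
      using is_K_inf_T0 e unfolding is_K_inf_def by blast
    define m where "m = max N1 N2"
    have a: "nsq (\<lambda>x. Km p m f x - ?T f x) \<le> e\<^sup>2 * nsq f"
      using N1 f e by (intro L2norm_le_sq) (auto simp: m_def)
    have b: "nsq (\<lambda>x. Km p m f x - T0 f x) \<le> e\<^sup>2 * nsq f"
      using N2 f e by (intro L2norm_le_sq) (auto simp: m_def)
    have "nsq (\<lambda>x. ?T f x - T0 f x) \<le> 2 * nsq (\<lambda>x. ?T f x - Km p m f x) + 2 * nsq (\<lambda>x. Km p m f x - T0 f x)"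
      by (rule nsq_tri[OF TL T0L Km_L2[OF f]])
    also have "\<dots> \<le> 2 * (e\<^sup>2 * nsq f) + 2 * (e\<^sup>2 * nsq f)"
      using a b nsq_swap[of "?T f" "Km p m f"] by linarith
    finally show ?thesis by (simp add: mult_ac)
  qed
  have z: "nsq (\<lambda>x. ?T f x - T0 f x) \<le> 0"
  proof (rule field_le_epsilon)
    fix d :: real assume d: "d > 0"
    define e where "e = sqrt (d / (4 * (nsq f + 1)))"
    have e0: "e > 0" using d nsq_nonneg[of f] by (simp add: e_def)
    have "4 * e\<^sup>2 * nsq f = d * (nsq f / (nsq f + 1))"
      using d nsq_nonneg[of f] by (simp add: e_def field_simps)
    also have "\<dots> \<le> d * 1" using d nsq_nonneg[of f] by (intro mult_left_mono) auto
    finally show "nsq (\<lambda>x. ?T f x - T0 f x) \<le> 0 + d" using bound[OF e0] by simp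
  qed
  have int: "integrable M (\<lambda>x. (cmod (?T f x - T0 f x))\<^sup>2)" using L2_diff[OF TL T0L] by (simp add: L2_def)
  have "nsq (\<lambda>x. ?T f x - T0 f x) = 0" using z nsq_nonneg[of "\<lambda>x. ?T f x - T0 f x"] by linarith
  then have "(\<integral>x. (cmod (?T f x - T0 f x))\<^sup>2 \<partial>M) = 0" by (simp add: nsq_def)
  then have "AE x in M. (cmod (?T f x - T0 f x))\<^sup>2 = 0"
    using integral_nonneg_eq_0_iff_AE[OF int] by simp
  then show ?thesis by eventually_elim simp
qed

end



context cm
begin

definition lv :: "(real \<Rightarrow> complex) \<Rightarrow> (real \<Rightarrow> complex) \<Rightarrow> nat \<Rightarrow> complex" where
  "lv g f n = (\<Sum>u\<in>words_eq n. cnj (cf g u) * cf f u)"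

lemma inner_ind: assumes g: "L2 p g"
  shows "(\<integral>x. cnj (g x) * ind (Cw u) x \<partial>M) = cnj (cf g u)"
proof -
  have "cnj (cf g u) = (\<integral>x. cnj (indicator (Cw u) x * g x) \<partial>M)"
    unfolding cf_eq by (rule Bochner_Integration.integral_cnj[symmetric])
  also have "\<dots> = (\<integral>x. cnj (g x) * ind (Cw u) x \<partial>M)"
    by (rule Bochner_Integration.integral_cong) (auto simp: ind_def indicator_def)
  finally show ?thesis by simp
qed

lemma int_cnj_ind: "L2 p g \<Longrightarrow> integrable M (\<lambda>x. cnj (g x) * ind (Cw u) x)"
  using integrable_bounded_mult[OF integrable_cnj[OF L2_int], of g "ind (Cw u)" 1]
  by (auto simp: ind_def indicator_def mult.commute)

lemma inner_levA: assumes g: "L2 p g"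
  shows "(\<integral>x. cnj (g x) * levA a n x \<partial>M) = (\<Sum>u\<in>words_eq n. a u * cnj (cf g u))"
proof -
  have "(\<integral>x. cnj (g x) * levA a n x \<partial>M) = (\<integral>x. (\<Sum>u\<in>words_eq n. a u * (cnj (g x) * ind (Cw u) x)) \<partial>M)"
    unfolding levA_def by (simp add: sum_distrib_left mult_ac)
  also have "\<dots> = (\<Sum>u\<in>words_eq n. (\<integral>x. a u * (cnj (g x) * ind (Cw u) x) \<partial>M))"
    by (rule Bochner_Integration.integral_sum) (simp add: int_cnj_ind[OF g])
  also have "\<dots> = (\<Sum>u\<in>words_eq n. a u * cnj (cf g u))"
    by (simp add: inner_ind[OF g])
  finally show ?thesis .
qed

lemma partial_L2: assumes "decay B a" shows "L2 p (\<lambda>x. \<Sum>n<m. levA a n x)"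
proof (rule L2_bounded)
  show "(\<lambda>x. \<Sum>n<m. levA a n x) \<in> borel_measurable borel" by measurable
  fix x
  have "cmod (\<Sum>n<m. levA a n x) \<le> (\<Sum>n<m. cmod (levA a n x))" by (rule norm_sum)
  also have "\<dots> \<le> (\<Sum>n<m. B * rho ^ n)" by (intro sum_mono levA_decay[OF assms])
  finally show "cmod (\<Sum>n<m. levA a n x) \<le> (\<Sum>n<m. B * rho ^ n)" .
qed

lemma int_abs_le: "L2 p g \<Longrightarrow> (\<integral>x. cmod (g x) \<partial>M) \<le> sqrt (nsq g)"
proof -
  assume g: "L2 p g"
  have "(\<integral>x. 1 * cmod (g x) \<partial>M)\<^sup>2 \<le> (\<integral>x. 1\<^sup>2 \<partial>M) * (\<integral>x. (cmod (g x))\<^sup>2 \<partial>M)"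
    by (rule CS_real) (use L2_meas[OF g] L2_sq_int[OF g] in auto)
  then have "(\<integral>x. cmod (g x) \<partial>M)\<^sup>2 \<le> nsq g" using pM.prob_space by (simp add: nsq_def)
  then show ?thesis by (simp add: real_le_rsqrt)
qed

lemma inner_T0_sums: assumes g: "L2 p g" and f: "L2 p f"
  shows "lv g f sums inner_mu p g (T0 f)"
  unfolding sums_def
proof -
  define P where "P m = (\<Sum>n<m. lv g f n)" for m
  define C where "C = (\<integral>x. cmod (g x) \<partial>M) * sqrt (nsq f) / (1 - rho)"
  have d: "decay (sqrt (nsq f)) (cf f)" by (rule decay_cf[OF f])
  have Pm: "P m = (\<integral>x. cnj (g x) * (\<Sum>n<m. levA (cf f) n x) \<partial>M)" for m
  proof -
    have "(\<integral>x. cnj (g x) * (\<Sum>n<m. levA (cf f) n x) \<partial>M) = (\<integral>x. (\<Sum>n<m. cnj (g x) * levA (cf f) n x) \<partial>M)"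
      by (simp add: sum_distrib_left)
    also have "\<dots> = (\<Sum>n<m. \<integral>x. cnj (g x) * levA (cf f) n x \<partial>M)"
    proof (rule Bochner_Integration.integral_sum)
      fix n
      have "L2 p (levA (cf f) n)" using partial_L2[OF d, of "Suc n"] partial_L2[OF d, of n]
        L2_diff[OF partial_L2[OF d, of "Suc n"] partial_L2[OF d, of n]] by simp
      then show "integrable M (\<lambda>x. cnj (g x) * levA (cf f) n x)" by (rule L2_prod[OF g])
    qed
    also have "\<dots> = P m" unfolding P_def lv_def inner_levA[OF g] by (simp add: mult.commute)
    finally show ?thesis by simp
  qed
  have diff: "cmod (inner_mu p g (T0 f) - P m) \<le> C * rho ^ m" for m
  proof -
    have "inner_mu p g (T0 f) - P m = (\<integral>x. cnj (g x) * T0 f x - cnj (g x) * (\<Sum>n<m. levA (cf f) n x) \<partial>M)"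
      unfolding inner_mu_def Pm
      by (rule Bochner_Integration.integral_diff[symmetric]) (intro L2_prod g T0_L2 f partial_L2[OF d])+
    also have "\<dots> = (\<integral>x. cnj (g x) * (T0 f x - (\<Sum>n<m. levA (cf f) n x)) \<partial>M)"
      by (simp add: right_diff_distrib)
    finally have e: "inner_mu p g (T0 f) - P m = \<dots>" .
    have "cmod (\<integral>x. cnj (g x) * (T0 f x - (\<Sum>n<m. levA (cf f) n x)) \<partial>M)
        \<le> (\<integral>x. cmod (cnj (g x) * (T0 f x - (\<Sum>n<m. levA (cf f) n x))) \<partial>M)"
      by (rule integral_norm_bound)
    also have "\<dots> \<le> (\<integral>x. cmod (g x) * (sqrt (nsq f) * rho ^ m / (1 - rho)) \<partial>M)"
    proof (rule integral_mono)
      show "integrable M (\<lambda>x. cmod (cnj (g x) * (T0 f x - (\<Sum>n<m. levA (cf f) n x))))"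
        by (intro integrable_norm L2_prod g L2_diff T0_L2 f partial_L2[OF d])
      show "integrable M (\<lambda>x. cmod (g x) * (sqrt (nsq f) * rho ^ m / (1 - rho)))"
        using integrable_norm[OF L2_int[OF g]] by simp
      fix x
      show "cmod (cnj (g x) * (T0 f x - (\<Sum>n<m. levA (cf f) n x))) \<le> cmod (g x) * (sqrt (nsq f) * rho ^ m / (1 - rho))"
        unfolding norm_mult complex_mod_cnj T0_def by (intro mult_left_mono tail_bound[OF d]) auto
    qed
    also have "\<dots> = C * rho ^ m" unfolding C_def by simp
    finally show ?thesis using e by simp
  qed
  have "(\<lambda>m. inner_mu p g (T0 f) - P m) \<longlonglongrightarrow> 0"
  proof (rule Lim_null_comparison)
    show "\<forall>\<^sub>F m in sequentially. norm (inner_mu p g (T0 f) - P m) \<le> C * rho ^ m" using diff by simp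
    show "(\<lambda>m. C * rho ^ m) \<longlonglongrightarrow> 0" using rho_bounds by (intro tendsto_mult_right_zero LIMSEQ_power_zero) auto
  qed
  from tendsto_diff[OF tendsto_const[of "inner_mu p g (T0 f)"] this]
  show "(\<lambda>m. \<Sum>n<m. lv g f n) \<longlonglongrightarrow> inner_mu p g (T0 f)" by (simp add: P_def)
qed

definition Qf :: "(real \<Rightarrow> complex) \<Rightarrow> real" where
  "Qf f = Re (inner_mu p f (T0 f))"

definition qs :: "(real \<Rightarrow> complex) \<Rightarrow> nat \<Rightarrow> real" where
  "qs f n = (\<Sum>u\<in>words_eq n. (cmod (cf f u))\<^sup>2)"

lemma cnj_mult_self: "cnj z * z = complex_of_real ((cmod z)^2)"
  by (metis complex_norm_square mult.commute)

lemma lv_self: "lv f f n = of_real (qs f n)"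
  unfolding lv_def qs_def of_real_sum cnj_mult_self ..

lemma Qf_sums: assumes f: "L2 p f" shows "qs f sums Qf f" and "inner_mu p f (T0 f) = of_real (Qf f)"
proof -
  have s: "lv f f sums inner_mu p f (T0 f)" by (rule inner_T0_sums[OF f f])
  from sums_Re[OF s] show "qs f sums Qf f" unfolding Qf_def lv_self by simp
  have "(\<lambda>n. Im (lv f f n)) sums Im (inner_mu p f (T0 f))" using s sums_complex_iff by blast
  then have "Im (inner_mu p f (T0 f)) = 0" unfolding lv_self using sums_unique[of "\<lambda>n. 0"] by (simp add: sums_0)
  then show "inner_mu p f (T0 f) = of_real (Qf f)" unfolding Qf_def by (simp add: complex_eq_iff)
qed

lemma qs_nonneg: "0 \<le> qs f n" unfolding qs_def by (simp add: sum_nonneg)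

lemma Qf_nonneg: "L2 p f \<Longrightarrow> 0 \<le> Qf f"
  using Qf_sums(1) qs_nonneg by (metis sums_le sums_zero)

lemma form_CS: assumes g: "L2 p g" and f: "L2 p f"
  shows "(cmod (inner_mu p g (T0 f)))\<^sup>2 \<le> Qf g * Qf f"
proof -
  have part: "(cmod (\<Sum>n<m. lv g f n))\<^sup>2 \<le> (\<Sum>n<m. qs g n) * (\<Sum>n<m. qs f n)" for m
  proof -
    let ?S = "SIGMA n:{..<m}. words_eq n"
    have fin: "finite ?S" using finite_words_eq by auto
    have "cmod (\<Sum>n<m. lv g f n) \<le> (\<Sum>n<m. \<Sum>u\<in>words_eq n. cmod (cf g u) * cmod (cf f u))"
    proof -
      have "cmod (\<Sum>n<m. lv g f n) \<le> (\<Sum>n<m. cmod (lv g f n))" by (rule norm_sum)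
      also have "\<dots> \<le> (\<Sum>n<m. \<Sum>u\<in>words_eq n. cmod (cf g u) * cmod (cf f u))"
      proof (rule sum_mono)
        fix n
        have "cmod (lv g f n) \<le> (\<Sum>u\<in>words_eq n. cmod (cnj (cf g u) * cf f u))" unfolding lv_def by (rule norm_sum)
        then show "cmod (lv g f n) \<le> (\<Sum>u\<in>words_eq n. cmod (cf g u) * cmod (cf f u))" by (simp add: norm_mult)
      qed
      finally show ?thesis .
    qed
    also have "\<dots> = (\<Sum>(n,u)\<in>?S. cmod (cf g u) * cmod (cf f u))"
      by (rule sum.Sigma) (auto simp: finite_words_eq)
    finally have a: "cmod (\<Sum>n<m. lv g f n) \<le> (\<Sum>(n,u)\<in>?S. cmod (cf g u) * cmod (cf f u))" .
    have "(cmod (\<Sum>n<m. lv g f n))\<^sup>2 \<le> (\<Sum>(n,u)\<in>?S. cmod (cf g u) * cmod (cf f u))\<^sup>2"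
      using a by (intro power_mono) auto
    also have "\<dots> \<le> (\<Sum>(n,u)\<in>?S. (cmod (cf g u))\<^sup>2) * (\<Sum>(n,u)\<in>?S. (cmod (cf f u))\<^sup>2)"
      using Cauchy_Schwarz_ineq_sum[of "\<lambda>(n,u). cmod (cf g u)" "\<lambda>(n,u). cmod (cf f u)" ?S]
      by (simp add: case_prod_unfold)
    also have "(\<Sum>(n,u)\<in>?S. (cmod (cf g u))\<^sup>2) = (\<Sum>n<m. qs g n)"
      unfolding qs_def by (rule sum.Sigma[symmetric]) (auto simp: finite_words_eq)
    also have "(\<Sum>(n,u)\<in>?S. (cmod (cf f u))\<^sup>2) = (\<Sum>n<m. qs f n)"
      unfolding qs_def by (rule sum.Sigma[symmetric]) (auto simp: finite_words_eq)
    finally show ?thesis .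
  qed
  have l1: "(\<lambda>m. (cmod (\<Sum>n<m. lv g f n))\<^sup>2) \<longlonglongrightarrow> (cmod (inner_mu p g (T0 f)))\<^sup>2"
    using inner_T0_sums[OF g f] unfolding sums_def by (intro tendsto_intros)
  have l2: "(\<lambda>m. (\<Sum>n<m. qs g n) * (\<Sum>n<m. qs f n)) \<longlonglongrightarrow> Qf g * Qf f"
    using Qf_sums(1)[OF g] Qf_sums(1)[OF f] unfolding sums_def by (intro tendsto_intros)
  show ?thesis by (rule LIMSEQ_le[OF l1 l2]) (use part in auto)
qed

end



lemma cmod_diff_sq:
  fixes a b :: complex and s :: real
  shows "(cmod (a - of_real s * b))\<^sup>2 = (cmod a)\<^sup>2 - 2 * s * Re (cnj b * a) + s\<^sup>2 * (cmod b)\<^sup>2"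
  unfolding cmod_power2 by (simp add: power2_eq_square algebra_simps)

context cm
begin

lemma cf_le_norm: assumes f: "L2 p f" shows "cmod (cf f u) \<le> sqrt (nsq f)"
proof -
  have "cmod (cf f u) \<le> (\<integral>x. cmod (indicator (Cw u) x * f x) \<partial>M)"
    unfolding cf_eq by (rule integral_norm_bound)
  also have "\<dots> \<le> (\<integral>x. cmod (f x) \<partial>M)"
  proof (rule integral_mono)
    show "integrable M (\<lambda>x. cmod (indicator (Cw u) x * f x))" by (intro integrable_norm ind_int_mult f)
    show "integrable M (\<lambda>x. cmod (f x))" by (intro integrable_norm L2_int f)
  qed (auto simp: indicator_def)
  also have "\<dots> \<le> sqrt (nsq f)" by (rule int_abs_le[OF f])
  finally show ?thesis .
qed

lemma nsq_scale: "nsq (\<lambda>x. c * f x) = (cmod c)\<^sup>2 * nsq f"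
  unfolding nsq_def by (simp add: norm_mult power_mult_distrib)

lemma Qf_scale: assumes f: "L2 p f" shows "Qf (\<lambda>x. c * f x) = (cmod c)\<^sup>2 * Qf f"
proof -
  have e: "qs (\<lambda>x. c * f x) = (\<lambda>n. (cmod c)\<^sup>2 * qs f n)"
    unfolding qs_def cf_scale by (rule ext) (simp add: norm_mult power_mult_distrib sum_distrib_left)
  have "qs (\<lambda>x. c * f x) sums ((cmod c)\<^sup>2 * Qf f)" unfolding e by (rule sums_mult[OF Qf_sums(1)[OF f]])
  moreover have "qs (\<lambda>x. c * f x) sums Qf (\<lambda>x. c * f x)" by (rule Qf_sums(1)[OF L2_scale[OF f]])
  ultimately show ?thesis using sums_unique2 by blast
qed

lemma inner_self: assumes f: "L2 p f" shows "inner_mu p f f = of_real (nsq f)"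
proof -
  have "inner_mu p f f = (\<integral>x. of_real ((cmod (f x))\<^sup>2) \<partial>M)"
    unfolding inner_mu_def by (simp add: cnj_mult_self)
  also have "\<dots> = of_real (nsq f)" unfolding nsq_def by (rule integral_complex_of_real)
  finally show ?thesis .
qed

lemma Qf_le: assumes f: "L2 p f" shows "Qf f \<le> nsq f / (1 - rho)"
proof -
  have "Qf f \<le> cmod (inner_mu p f (T0 f))" unfolding Qf_def by (rule complex_Re_le_cmod)
  also have "\<dots> \<le> (\<integral>x. cmod (cnj (f x) * T0 f x) \<partial>M)" unfolding inner_mu_def by (rule integral_norm_bound)
  also have "\<dots> \<le> (\<integral>x. cmod (f x) * (sqrt (nsq f) / (1 - rho)) \<partial>M)"
  proof (rule integral_mono)
    show "integrable M (\<lambda>x. cmod (cnj (f x) * T0 f x))" by (intro integrable_norm L2_prod f T0_L2)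
    show "integrable M (\<lambda>x. cmod (f x) * (sqrt (nsq f) / (1 - rho)))" using integrable_norm[OF L2_int[OF f]] by simp
    fix x show "cmod (cnj (f x) * T0 f x) \<le> cmod (f x) * (sqrt (nsq f) / (1 - rho))"
      unfolding norm_mult complex_mod_cnj by (intro mult_left_mono T0_bound f) auto
  qed
  also have "\<dots> = (\<integral>x. cmod (f x) \<partial>M) * (sqrt (nsq f) / (1 - rho))" by simp
  also have "\<dots> \<le> sqrt (nsq f) * (sqrt (nsq f) / (1 - rho))"
    using rho_bounds nsq_nonneg[of f] by (intro mult_right_mono int_abs_le f) auto
  also have "\<dots> = nsq f / (1 - rho)" using nsq_nonneg[of f] by (simp add: real_sqrt_mult[symmetric])
  finally show ?thesis .
qed

definition EV :: "real set" where "EV = {Qf f / nsq f | f. L2 p f \<and> nsq f \<noteq> 0}"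
definition sM :: real where "sM = Sup EV"

lemma one_L2: "L2 p (\<lambda>x. 1)" by (rule L2_bounded[of _ 1]) auto
lemma nsq_one: "nsq (\<lambda>x. 1) = 1" unfolding nsq_def using pM.prob_space by simp

lemma EV_ne: "EV \<noteq> {}" unfolding EV_def using one_L2 nsq_one by auto

lemma EV_bdd: "bdd_above EV"
proof (rule bdd_aboveI)
  fix y assume "y \<in> EV"
  then obtain f where f: "L2 p f" "nsq f \<noteq> 0" "y = Qf f / nsq f" unfolding EV_def by blast
  have n: "nsq f > 0" using f(2) nsq_nonneg[of f] by simp
  have "Qf f / nsq f \<le> (nsq f / (1 - rho)) / nsq f" using Qf_le[OF f(1)] n by (intro divide_right_mono) auto
  also have "\<dots> = 1 / (1 - rho)" using n by simp
  finally show "y \<le> 1 / (1 - rho)" using f(3) by simp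
qed

lemma EV_le: "L2 p f \<Longrightarrow> nsq f \<noteq> 0 \<Longrightarrow> Qf f \<le> sM * nsq f"
proof -
  assume f: "L2 p f" "nsq f \<noteq> 0"
  have n: "nsq f > 0" using f(2) nsq_nonneg[of f] by simp
  have "Qf f / nsq f \<le> sM" unfolding sM_def using f by (intro cSup_upper EV_bdd) (auto simp: EV_def)
  then show ?thesis using n by (simp add: field_simps)
qed

lemma sM_nonneg: "0 \<le> sM"
proof -
  have "0 \<le> Qf (\<lambda>x. 1) / nsq (\<lambda>x. 1)" using Qf_nonneg[OF one_L2] nsq_one by simp
  also have "\<dots> \<le> sM" unfolding sM_def
  proof (intro cSup_upper EV_bdd)
    show "Qf (\<lambda>x. 1) / nsq (\<lambda>x. 1) \<in> EV" unfolding EV_def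
      by (intro CollectI exI[of _ "\<lambda>x. 1"]) (simp add: one_L2 nsq_one)
  qed
  finally show ?thesis .
qed

lemma Qf_le_sM: "L2 p f \<Longrightarrow> Qf f \<le> sM * nsq f"
proof (cases "nsq f = 0")
  case True
  assume f: "L2 p f"
  then have "Qf f \<le> 0" using Qf_le[OF f] True by simp
  then show ?thesis using True by simp
qed (rule EV_le)

lemma T0_nsq_le: assumes f: "L2 p f" shows "nsq (T0 f) \<le> sM * Qf f"
proof -
  have Tf: "L2 p (T0 f)" by (rule T0_L2[OF f])
  have "(nsq (T0 f))\<^sup>2 = (cmod (inner_mu p (T0 f) (T0 f)))\<^sup>2"
    using inner_self[OF Tf] nsq_nonneg[of "T0 f"] by simp
  also have "\<dots> \<le> Qf (T0 f) * Qf f" by (rule form_CS[OF Tf f])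
  also have "\<dots> \<le> (sM * nsq (T0 f)) * Qf f"
    by (intro mult_right_mono Qf_le_sM Tf Qf_nonneg f)
  finally have a: "(nsq (T0 f))\<^sup>2 \<le> nsq (T0 f) * (sM * Qf f)" by (simp add: mult_ac)
  show ?thesis
  proof (cases "nsq (T0 f) = 0")
    case True then show ?thesis using sM_nonneg Qf_nonneg[OF f] by simp
  next
    case False
    then have "nsq (T0 f) > 0" using nsq_nonneg[of "T0 f"] by simp
    then show ?thesis using a by (simp add: power2_eq_square)
  qed
qed

lemma nsq_T0_minus: assumes f: "L2 p f"
  shows "nsq (\<lambda>x. T0 f x - of_real sM * f x) = nsq (T0 f) - 2 * sM * Qf f + sM\<^sup>2 * nsq f"
proof -
  have i1: "integrable M (\<lambda>x. (cmod (T0 f x))\<^sup>2)" using L2_sq_int[OF T0_L2[OF f]] .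
  have i2: "integrable M (\<lambda>x. Re (cnj (f x) * T0 f x))" by (intro integrable_Re L2_prod f T0_L2)
  have i3: "integrable M (\<lambda>x. (cmod (f x))\<^sup>2)" using L2_sq_int[OF f] .
  have "nsq (\<lambda>x. T0 f x - of_real sM * f x) = (\<integral>x. (cmod (T0 f x))\<^sup>2 - 2 * sM * Re (cnj (f x) * T0 f x) + sM\<^sup>2 * (cmod (f x))\<^sup>2 \<partial>M)"
    unfolding nsq_def cmod_diff_sq ..
  also have "\<dots> = (\<integral>x. (cmod (T0 f x))\<^sup>2 - 2 * sM * Re (cnj (f x) * T0 f x) \<partial>M) + (\<integral>x. sM\<^sup>2 * (cmod (f x))\<^sup>2 \<partial>M)"
    by (rule Bochner_Integration.integral_add) (use i1 i2 i3 in auto)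
  also have "(\<integral>x. (cmod (T0 f x))\<^sup>2 - 2 * sM * Re (cnj (f x) * T0 f x) \<partial>M) = (\<integral>x. (cmod (T0 f x))\<^sup>2 \<partial>M) - (\<integral>x. 2 * sM * Re (cnj (f x) * T0 f x) \<partial>M)"
    by (rule Bochner_Integration.integral_diff) (use i1 i2 in auto)
  also have "(\<integral>x. 2 * sM * Re (cnj (f x) * T0 f x) \<partial>M) = 2 * sM * Qf f"
    unfolding Qf_def inner_mu_def using integral_Re[OF L2_prod[OF f T0_L2[OF f]]] by simp
  also have "(\<integral>x. sM\<^sup>2 * (cmod (f x))\<^sup>2 \<partial>M) = sM\<^sup>2 * nsq f" unfolding nsq_def by simp
  finally show ?thesis unfolding nsq_def by simp
qed

lemma approx_eig: assumes f: "L2 p f"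
  shows "nsq (\<lambda>x. T0 f x - of_real sM * f x) \<le> sM * (sM * nsq f - Qf f)"
  using nsq_T0_minus[OF f] T0_nsq_le[OF f] by (simp add: power2_eq_square algebra_simps)

lemma eig_le: assumes f: "L2 p f" "nsq f \<noteq> 0" and ev: "AE x in M. K_inf p f x = of_real l * f x"
  shows "l \<le> sM"
proof -
  have AE: "AE x in M. T0 f x = of_real l * f x" using ev T_eq_T0[OF f(1)] by eventually_elim simp
  have [measurable]: "f \<in> borel_measurable borel" using L2_meas[OF f(1)] .
  have "inner_mu p f (T0 f) = inner_mu p f (\<lambda>x. of_real l * f x)"
    unfolding inner_mu_def
  proof (rule integral_cong_AE)
    show "AE x in M. cnj (f x) * T0 f x = cnj (f x) * (of_real l * f x)" using AE by eventually_elim simp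
  qed measurable
  also have "\<dots> = of_real l * inner_mu p f f" unfolding inner_mu_def by (simp add: mult.left_commute)
  finally have "(of_real (Qf f) :: complex) = of_real l * of_real (nsq f)" using Qf_sums(2)[OF f(1)] inner_self[OF f(1)] by simp
  then have "Qf f = l * nsq f" by (metis of_real_eq_iff of_real_mult)
  then show ?thesis using EV_le[OF f] nsq_nonneg[of f] f(2) by (simp add: mult_right_mono_neg)
qed

end



context cm
begin

lemma max_seq: "\<exists>F. \<forall>k. L2 p (F k) \<and> nsq (F k) = 1 \<and> sM - 1 / real (Suc k) < Qf (F k)"
proof -
  have "\<exists>f. L2 p f \<and> nsq f = 1 \<and> sM - 1 / real (Suc k) < Qf f" for k
  proof -
    have "sM - 1 / real (Suc k) < Sup EV" unfolding sM_def[symmetric] by simp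
    then obtain y where y: "y \<in> EV" "sM - 1 / real (Suc k) < y" using less_cSupE[OF _ EV_ne] by blast
    then obtain f where f: "L2 p f" "nsq f \<noteq> 0" "y = Qf f / nsq f" unfolding EV_def by blast
    have n: "nsq f > 0" using f(2) nsq_nonneg[of f] by simp
    define c where "c = complex_of_real (1 / sqrt (nsq f))"
    have "cmod c = 1 / sqrt (nsq f)" unfolding c_def norm_of_real using n by simp
    then have cc: "(cmod c)\<^sup>2 = 1 / nsq f" using n by (simp add: power_divide)
    have "L2 p (\<lambda>x. c * f x)" by (rule L2_scale[OF f(1)])
    moreover have "nsq (\<lambda>x. c * f x) = 1" using n by (simp add: nsq_scale cc)
    moreover have "Qf (\<lambda>x. c * f x) = y" using f(3) by (simp add: Qf_scale[OF f(1)] cc)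
    ultimately show ?thesis using y(2) by blast
  qed
  then show ?thesis by metis
qed

lemma diag:
  fixes F :: "nat \<Rightarrow> real \<Rightarrow> complex"
  assumes F: "\<And>k. L2 p (F k) \<and> nsq (F k) = 1"
  shows "\<exists>d. strict_mono d \<and> (\<forall>u. convergent (\<lambda>k. cf (F (d k)) u))"
proof -
  define P where "P n s \<longleftrightarrow> convergent (\<lambda>k. cf (F (s k)) (from_nat n :: nat list))" for n s
  have bnd: "cmod (cf (F k) u) \<le> 1" for k u using cf_le_norm[of "F k" u] F[of k] by simp
  have sub: "subseqs P"
    unfolding subseqs_def
  proof (intro allI impI)
    fix n and s :: "nat \<Rightarrow> nat" assume "strict_mono s"
    have "bounded (range (\<lambda>k. cf (F (s k)) (from_nat n)))"
      using bnd by (intro boundedI[of _ 1]) auto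
    then obtain l r where r: "strict_mono r" "((\<lambda>k. cf (F (s k)) (from_nat n)) \<circ> r) \<longlonglongrightarrow> l"
      using bounded_imp_convergent_subsequence by blast
    then have "P n (s \<circ> r)" unfolding P_def by (auto simp: convergent_def comp_def)
    then show "\<exists>r'. strict_mono r' \<and> P n (s \<circ> r')" using r(1) by blast
  qed
  interpret D: subseqs P by (rule sub)
  have hold: "P k (D.diagseq \<circ> (+) (Suc k))" for k
  proof (rule D.diagseq_holds)
    fix r s n assume "strict_mono (r :: nat \<Rightarrow> nat)" "P n s"
    then show "P n (s \<circ> r)" unfolding P_def using convergent_subseq_convergent[of _ r] by (simp add: comp_def)
  qed
  have "convergent (\<lambda>k. cf (F (D.diagseq k)) u)" for u
  proof -
    have "P (to_nat u) (D.diagseq \<circ> (+) (Suc (to_nat u)))" by (rule hold)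
    then have "convergent (\<lambda>k. cf (F (D.diagseq (k + Suc (to_nat u)))) u)"
      unfolding P_def by (simp add: comp_def add.commute)
    then show ?thesis by (rule convergent_ignore_initial_segment[THEN iffD1])
  qed
  then show ?thesis using D.subseq_diagseq by blast
qed

lemma sM_eigen:
  assumes s0: "0 < sM"
  shows "\<exists>g. L2 p g \<and> nsq g \<noteq> 0 \<and> (\<forall>x. T0 g x = of_real sM * g x)"
proof -
  obtain F where F: "\<And>k. L2 p (F k) \<and> nsq (F k) = 1 \<and> sM - 1 / real (Suc k) < Qf (F k)"
    using max_seq by blast
  obtain d where d: "strict_mono d" "\<And>u. convergent (\<lambda>k. cf (F (d k)) u)"
    using diag[of F] F by blast
  define G where "G k = F (d k)" for k
  have GL: "L2 p (G k)" and Gn: "nsq (G k) = 1" for k using F by (auto simp: G_def)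
  have Gapprox: "nsq (\<lambda>x. T0 (G k) x - of_real sM * G k x) \<le> sM / real (Suc k)" for k
  proof -
    have "nsq (\<lambda>x. T0 (G k) x - of_real sM * G k x) \<le> sM * (sM * nsq (G k) - Qf (G k))"
      by (rule approx_eig[OF GL])
    also have "\<dots> \<le> sM * (1 / real (Suc (d k)))"
      using F[of "d k"] Gn[of k] s0 by (intro mult_left_mono) (auto simp: G_def)
    also have "\<dots> \<le> sM * (1 / real (Suc k))"
      using seq_suble[OF d(1), of k] s0 by (intro mult_left_mono divide_left_mono) auto
    finally show ?thesis by simp
  qed
  define A where "A u = lim (\<lambda>k. cf (G k) u)" for u
  have conv: "(\<lambda>k. cf (G k) u) \<longlonglongrightarrow> A u" for u
    using d(2)[of u] unfolding A_def G_def by (simp add: convergent_LIMSEQ_iff)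
  have decG: "decay 1 (cf (G k))" for k using decay_cf[OF GL[of k]] Gn[of k] by simp
  have decA: "decay 1 A"
    unfolding decay_def
  proof (intro allI ballI)
    fix n u assume u: "u \<in> words_eq n"
    have "(\<lambda>k. cmod (cf (G k) u)) \<longlonglongrightarrow> cmod (A u)" by (intro tendsto_norm conv)
    moreover have "\<forall>k. cmod (cf (G k) u) \<le> 1 * rho ^ n" using decG u unfolding decay_def by blast
    ultimately show "cmod (A u) \<le> 1 * rho ^ n" by (intro LIMSEQ_le_const2) auto
  qed
  define g where "g = SerA A"
  have gL: "L2 p g" unfolding g_def by (rule SerA_L2[OF decA])
  have unif: "\<exists>K. \<forall>k\<ge>K. \<forall>x. cmod (T0 (G k) x - g x) \<le> e" if e: "e > 0" for e
  proof -
    have "(\<lambda>m. rho ^ m) \<longlonglongrightarrow> 0" using rho_bounds by (intro LIMSEQ_power_zero) auto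
    moreover have "e * (1 - rho) / 4 > 0" using e rho_bounds by simp
    ultimately obtain m where m: "rho ^ m < e * (1 - rho) / 4"
      using order_tendstoD(2) eventually_sequentially by (metis order_refl)
    define S where "S k = (\<Sum>n<m. \<Sum>u\<in>words_eq n. cmod (cf (G k) u - A u))" for k
    have "S \<longlonglongrightarrow> (\<Sum>n<m. \<Sum>u\<in>words_eq n. 0)"
      unfolding S_def
    proof (intro tendsto_sum)
      fix n u
      have "(\<lambda>k. cf (G k) u - A u) \<longlonglongrightarrow> 0" using conv[of u] by (simp add: LIM_zero)
      then show "(\<lambda>k. cmod (cf (G k) u - A u)) \<longlonglongrightarrow> 0" by (rule tendsto_norm_zero)
    qed
    then have "S \<longlonglongrightarrow> 0" by simp
    moreover have "e / 2 > 0" using e by simp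
    ultimately obtain K where K: "\<And>k. k \<ge> K \<Longrightarrow> S k < e / 2"
      using order_tendstoD(2) eventually_sequentially by metis
    show ?thesis
    proof (intro exI allI impI)
      fix k x assume k: "K \<le> k"
      have "cmod (T0 (G k) x - g x) \<le> S k + (1 + 1) * rho ^ m / (1 - rho)"
        unfolding T0_def g_def S_def by (rule SerA_close[OF decG decA])
      also have "(1 + 1) * rho ^ m / (1 - rho) \<le> (1 + 1) * (e * (1 - rho) / 4) / (1 - rho)"
        using m rho_bounds by (intro divide_right_mono mult_left_mono) auto
      also have "\<dots> = e / 2" using rho_bounds by (simp add: field_simps)
      finally show "cmod (T0 (G k) x - g x) \<le> e" using K[OF k] by simp
    qed
  qed
  have sGL: "L2 p (\<lambda>x. of_real sM * G k x)" for k by (rule L2_scale[OF GL])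
  have close: "\<exists>K. \<forall>k\<ge>K. nsq (\<lambda>x. of_real sM * G k x - g x) \<le> e" if e: "e > 0" for e
  proof -
    define \<delta> where "\<delta> = sqrt (e / 4)"
    have \<delta>0: "\<delta> > 0" using e by (simp add: \<delta>_def)
    have \<delta>sq: "\<delta>\<^sup>2 = e / 4" using e by (simp add: \<delta>_def)
    obtain K1 where K1: "\<And>k x. k \<ge> K1 \<Longrightarrow> cmod (T0 (G k) x - g x) \<le> \<delta>" using unif[OF \<delta>0] by blast
    obtain K2 :: nat where K2: "4 * sM / e < real K2" using reals_Archimedean2 by blast
    show ?thesis
    proof (intro exI allI impI)
      fix k assume k: "max K1 K2 \<le> k"
      have TGL: "L2 p (T0 (G k))" by (rule T0_L2[OF GL])
      have "nsq (\<lambda>x. of_real sM * G k x - g x) \<le> 2 * nsq (\<lambda>x. of_real sM * G k x - T0 (G k) x) + 2 * nsq (\<lambda>x. T0 (G k) x - g x)"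
        by (rule nsq_tri[OF sGL gL TGL])
      also have "nsq (\<lambda>x. of_real sM * G k x - T0 (G k) x) \<le> sM / real (Suc k)"
        using Gapprox[of k] nsq_swap[of "\<lambda>x. of_real sM * G k x" "T0 (G k)"] by simp
      also have "nsq (\<lambda>x. T0 (G k) x - g x) \<le> \<delta>\<^sup>2"
      proof (rule nsq_le)
        show "(\<lambda>x. T0 (G k) x - g x) \<in> borel_measurable borel" using L2_meas[OF gL] by simp
        show "cmod (T0 (G k) x - g x) \<le> \<delta>" for x using K1 k by simp
      qed
      also have "sM / real (Suc k) \<le> e / 4"
      proof -
        have "4 * sM / e < real (Suc k)" using K2 k by simp
        then have "4 * sM < e * real (Suc k)" using e by (simp add: field_simps)
        then show ?thesis using e by (simp add: field_simps)
      qed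
      finally show "nsq (\<lambda>x. of_real sM * G k x - g x) \<le> e" using \<delta>sq by simp
    qed
  qed
  have eig: "T0 g x = of_real sM * g x" for x
  proof -
    have "cmod (T0 g x - of_real sM * g x) \<le> 0"
    proof (rule field_le_epsilon)
      fix e :: real assume e: "e > 0"
      define e1 where "e1 = (e * (1 - rho) / 2)\<^sup>2"
      have e1: "e1 > 0" using e rho_bounds by (simp add: e1_def)
      obtain K1 where K1: "\<And>k. k \<ge> K1 \<Longrightarrow> nsq (\<lambda>x. of_real sM * G k x - g x) \<le> e1" using close[OF e1] by blast
      have e2: "e / (2 * sM) > 0" using e s0 by simp
      obtain K2 where K2: "\<And>k x. k \<ge> K2 \<Longrightarrow> cmod (T0 (G k) x - g x) \<le> e / (2 * sM)" using unif[OF e2] by blast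
      define k where "k = max K1 K2"
      have a: "T0 g x - T0 (\<lambda>y. of_real sM * G k y) x = T0 (\<lambda>y. g y - of_real sM * G k y) x"
        by (rule T0_diff[OF gL sGL, symmetric])
      have "cmod (T0 (\<lambda>y. g y - of_real sM * G k y) x) \<le> sqrt (nsq (\<lambda>y. g y - of_real sM * G k y)) / (1 - rho)"
        by (rule T0_bound[OF L2_diff[OF gL sGL]])
      also have "\<dots> \<le> sqrt e1 / (1 - rho)"
        using K1[of k] nsq_swap[of g "\<lambda>y. of_real sM * G k y"] rho_bounds
        by (intro divide_right_mono real_sqrt_le_mono) (auto simp: k_def)
      also have "\<dots> = e / 2"
      proof -
        have "sqrt e1 = e * (1 - rho) / 2" unfolding e1_def using e rho_bounds by (simp add: real_sqrt_abs)
        then show ?thesis using rho_bounds by simp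
      qed
      finally have b1: "cmod (T0 g x - T0 (\<lambda>y. of_real sM * G k y) x) \<le> e / 2" using a by simp
      have "cmod (of_real sM * T0 (G k) x - of_real sM * g x) = sM * cmod (T0 (G k) x - g x)"
        using s0 by (simp add: right_diff_distrib[symmetric] norm_mult)
      also have "\<dots> \<le> sM * (e / (2 * sM))" using K2[of k x] s0 by (intro mult_left_mono) (auto simp: k_def)
      also have "\<dots> = e / 2" using s0 by simp
      finally have b2: "cmod (of_real sM * T0 (G k) x - of_real sM * g x) \<le> e / 2" .
      have "T0 g x - of_real sM * g x = (T0 g x - T0 (\<lambda>y. of_real sM * G k y) x) + (of_real sM * T0 (G k) x - of_real sM * g x)"
        using T0_scale[OF GL[of k], of "of_real sM" x] by simp
      then have "cmod (T0 g x - of_real sM * g x) \<le> e / 2 + e / 2"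
        using norm_triangle_le[OF add_mono[OF b1 b2]] by simp
      then show "cmod (T0 g x - of_real sM * g x) \<le> 0 + e" by simp
    qed
    then show ?thesis by simp
  qed
  have nz: "nsq g \<noteq> 0"
  proof
    assume g0: "nsq g = 0"
    have e: "sM\<^sup>2 / 4 > 0" using s0 by simp
    obtain K where K: "\<And>k. k \<ge> K \<Longrightarrow> nsq (\<lambda>x. of_real sM * G k x - g x) \<le> sM\<^sup>2 / 4" using close[OF e] by blast
    have zL: "L2 p (\<lambda>x. 0)" by (rule L2_bounded[of _ 0]) auto
    have "nsq (\<lambda>x. of_real sM * G K x - 0) \<le> 2 * nsq (\<lambda>x. of_real sM * G K x - g x) + 2 * nsq (\<lambda>x. g x - 0)"
      by (rule nsq_tri[OF sGL zL gL])
    moreover have "nsq (\<lambda>x. of_real sM * G K x - 0) = sM\<^sup>2" using nsq_scale[of "of_real sM" "G K"] Gn[of K] by simp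
    moreover have "nsq (\<lambda>x. g x - 0) = 0" using g0 by simp
    ultimately have "sM\<^sup>2 \<le> sM\<^sup>2 / 2" using K[of K] by linarith
    moreover have "sM\<^sup>2 > 0" using s0 by simp
    ultimately show False by simp
  qed
  show ?thesis using gL nz eig by blast
qed

end



context cm
begin

definition s0 :: real where "s0 = sqrt (p * (1 - p))"
definition q0 :: real where "q0 = p\<^sup>2 + (1 - p)\<^sup>2"

lemma s0_pos: "0 < s0" using p0 p1 by (simp add: s0_def)
lemma s0_sq: "s0\<^sup>2 = p * (1 - p)" using p0 p1 by (simp add: s0_def)
lemma one_minus_q0: "1 - q0 = 2 * p * (1 - p)" by (simp add: q0_def power2_eq_square algebra_simps)
lemma q0_bounds: "0 < q0" "q0 < 1"
proof -
  have "2 * p * (1 - p) > 0" using p0 p1 by simp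
  then show "q0 < 1" using one_minus_q0 by linarith
  have "p\<^sup>2 > 0" using p0 by simp
  then show "0 < q0" unfolding q0_def by (simp add: add_pos_nonneg)
qed

lemma ind_L2: "A \<in> sets borel \<Longrightarrow> L2 p (ind A)"
  by (rule L2_bounded[of _ 1]) (auto simp: ind_def indicator_def)

lemma cf_ind: assumes A: "A \<in> sets borel" shows "cf (ind A) u = of_real (measure M (Cw u \<inter> A))"
proof -
  have "cf (ind A) u = (\<integral>x. of_real (indicator (Cw u \<inter> A) x) \<partial>M)"
    unfolding cf_eq ind_def by (rule Bochner_Integration.integral_cong) (auto simp: indicator_def)
  also have "\<dots> = of_real (measure M (Cw u \<inter> A))"
    by (simp add: integral_complex_of_real del: of_real_indicator)
  finally show ?thesis .
qed

lemma C0_sub: "Cw [0] \<subseteq> cantor" and C2_sub: "Cw [2] \<subseteq> cantor"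
  using Cw_sub_cantor[of "[0]"] Cw_sub_cantor[of "[2]"] by auto

lemma C02_disj: "Cw [0] \<inter> Cw [2] = {}"
  by (rule Cw_disjoint_eq[of _ 1]) (auto simp: words_eq_def)

lemma m_C0: "measure M (Cw [0]) = p" using measure_Cw[of "[0]"] by simp
lemma m_C2: "measure M (Cw [2]) = 1 - p" using measure_Cw[of "[2]"] by simp

definition phi :: "real \<Rightarrow> complex" where "phi = ind cantor"
definition hh :: "real \<Rightarrow> complex" where
  "hh = (\<lambda>x. complex_of_real (1 - p) * ind (Cw [0]) x - complex_of_real p * ind (Cw [2]) x)"
definition ee :: "real \<Rightarrow> complex" where
  "ee = (\<lambda>x. hh x / complex_of_real (sqrt (p * (1 - p))))"

lemma phi_L2: "L2 p phi" unfolding phi_def by (rule ind_L2[OF cantor_borel])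
lemma hh_L2: "L2 p hh" unfolding hh_def
  by (intro L2_diff L2_scale ind_L2 Cw_borel)
lemma ee_alt: "ee = (\<lambda>x. complex_of_real (1 / s0) * hh x)"
  unfolding ee_def s0_def by (auto simp: field_simps)
lemma ee_L2: "L2 p ee" unfolding ee_alt by (intro L2_scale hh_L2)

lemma cf_phi: "set u \<subseteq> {0,2} \<Longrightarrow> cf phi u = of_real (wt p u)"
  unfolding phi_def using cf_ind[OF cantor_borel, of u] Cw_sub_cantor[of u] measure_Cw[of u]
  by (simp add: Int_absorb2)

lemma cf_hh: "cf hh u = of_real ((1 - p) * measure M (Cw u \<inter> Cw [0]) - p * measure M (Cw u \<inter> Cw [2]))"
proof -
  have "cf hh u = cf (\<lambda>x. complex_of_real (1 - p) * ind (Cw [0]) x) u - cf (\<lambda>x. complex_of_real p * ind (Cw [2]) x) u"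
    unfolding hh_def by (intro cf_diff L2_scale ind_L2 Cw_borel)
  also have "\<dots> = of_real (1 - p) * cf (ind (Cw [0])) u - of_real p * cf (ind (Cw [2])) u"
    by (simp add: cf_scale)
  finally show ?thesis by (simp add: cf_ind Cw_borel)
qed

definition ce :: "nat list \<Rightarrow> real" where
  "ce u = (if u = [] then 0 else if hd u = 0 then (1 - p) * wt p u / s0 else - p * wt p u / s0)"

lemma cf_ee: assumes u: "set u \<subseteq> {0,2}" shows "cf ee u = of_real (ce u)"
proof -
  have "cf ee u = of_real (1 / s0) * cf hh u" unfolding ee_alt by (rule cf_scale)
  also have "cf hh u = of_real (s0 * ce u)"
  proof (cases u)
    case Nil
    have "(1 - p) * measure M (Cw u \<inter> Cw [0]) - p * measure M (Cw u \<inter> Cw [2]) = 0"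
      using C0_sub C2_sub Nil by (simp add: Int_absorb1 m_C0 m_C2 algebra_simps)
    then show ?thesis unfolding cf_hh using Nil by (simp add: ce_def)
  next
    case (Cons d w)
    then have d: "d = 0 \<or> d = 2" and w: "set w \<subseteq> {0,2}" using u by auto
    have sub0: "Cw (0 # w) \<subseteq> Cw [0]" using Cw_prefix[OF w, of "[0]"] by simp
    have sub2: "Cw (2 # w) \<subseteq> Cw [2]" using Cw_prefix[OF w, of "[2]"] by simp
    from d show ?thesis
    proof
      assume d0: "d = 0"
      have "Cw u \<inter> Cw [0] = Cw u" "Cw u \<inter> Cw [2] = {}" using sub0 C02_disj Cons d0 by auto
      then show ?thesis using Cons d0 measure_Cw[OF u] s0_pos by (simp add: cf_hh ce_def)
    next
      assume d2: "d = 2"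
      have "Cw u \<inter> Cw [2] = Cw u" "Cw u \<inter> Cw [0] = {}" using sub2 C02_disj Cons d2 by auto
      then show ?thesis using Cons d2 measure_Cw[OF u] s0_pos by (simp add: cf_hh ce_def)
    qed
  qed
  finally show ?thesis using s0_pos by simp
qed

lemma lv_real:
  assumes "\<And>u. u \<in> words_eq n \<Longrightarrow> cf g u = of_real (a u)" "\<And>u. u \<in> words_eq n \<Longrightarrow> cf f u = of_real (b u)"
  shows "lv g f n = of_real (\<Sum>u\<in>words_eq n. a u * b u)"
  unfolding lv_def of_real_sum by (rule sum.cong) (auto simp: assms)

lemma sum_wt_sq: "(\<Sum>u\<in>words_eq n. (wt p u)\<^sup>2) = q0 ^ n"
proof (induction n)
  case 0 then show ?case by (simp add: words_eq_0)
next
  case (Suc n)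
  have "(\<Sum>u\<in>words_eq (Suc n). (wt p u)\<^sup>2) = (\<Sum>w\<in>words_eq n. p\<^sup>2 * (wt p w)\<^sup>2) + (\<Sum>w\<in>words_eq n. (1-p)\<^sup>2 * (wt p w)\<^sup>2)"
    unfolding sum_words_Suc by (simp add: power_mult_distrib)
  also have "\<dots> = q0 * (\<Sum>w\<in>words_eq n. (wt p w)\<^sup>2)"
    by (simp add: sum_distrib_left[symmetric] q0_def algebra_simps)
  finally show ?case using Suc by simp
qed

lemma we: "u \<in> words_eq n \<Longrightarrow> set u \<subseteq> {0,2}" by (simp add: words_eq_def)

lemma lv_pp: "lv phi phi n = of_real (q0 ^ n)"
  by (subst lv_real[where a="wt p" and b="wt p"]) (auto simp: cf_phi we sum_wt_sq power2_eq_square[symmetric])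

lemma ce_0: "ce [] = 0" by (simp add: ce_def)

lemma lv_pe_0: "lv phi ee 0 = 0" and lv_ep_0: "lv ee phi 0 = 0" and lv_ee_0: "lv ee ee 0 = 0"
  by (simp_all add: lv_def words_eq_0 cf_ee ce_0)

definition cpe :: real where "cpe = p * (1 - p) * (2 * p - 1) / s0"

lemma lv_pe_Suc: "lv phi ee (Suc k) = of_real (cpe * q0 ^ k)" and lv_ep_Suc: "lv ee phi (Suc k) = of_real (cpe * q0 ^ k)"
proof -
  have "(\<Sum>u\<in>words_eq (Suc k). wt p u * ce u) = (\<Sum>w\<in>words_eq k. cpe * (wt p w)\<^sup>2)"
    unfolding sum_words_Suc sum.distrib[symmetric]
    using s0_pos by (intro sum.cong) (auto simp: ce_def cpe_def power2_eq_square field_simps)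
  also have "\<dots> = cpe * q0 ^ k" by (simp add: sum_distrib_left[symmetric] sum_wt_sq)
  finally have e: "(\<Sum>u\<in>words_eq (Suc k). wt p u * ce u) = cpe * q0 ^ k" .
  show "lv phi ee (Suc k) = of_real (cpe * q0 ^ k)"
    by (subst lv_real[where a="wt p" and b=ce]) (auto simp: cf_phi cf_ee we e)
  show "lv ee phi (Suc k) = of_real (cpe * q0 ^ k)"
  proof -
    have e': "(\<Sum>u\<in>words_eq (Suc k). ce u * wt p u) = cpe * q0 ^ k" using e by (simp add: mult.commute)
    show ?thesis by (subst lv_real[where a=ce and b="wt p"]) (auto simp: cf_phi cf_ee we e')
  qed
qed

lemma lv_ee_Suc: "lv ee ee (Suc k) = of_real ((1 - q0) * q0 ^ k)"
proof -
  have "(\<Sum>u\<in>words_eq (Suc k). ce u * ce u) = (\<Sum>w\<in>words_eq k. (1 - q0) * (wt p w)\<^sup>2)"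
    unfolding sum_words_Suc sum.distrib[symmetric]
  proof (rule sum.cong)
    fix w
    have "ce (0 # w) * ce (0 # w) + ce (2 # w) * ce (2 # w) = 2 * p\<^sup>2 * (1-p)\<^sup>2 * (wt p w)\<^sup>2 / s0\<^sup>2"
      using s0_pos by (simp add: ce_def power2_eq_square field_simps)
    also have "\<dots> = 2 * p\<^sup>2 * (1-p)\<^sup>2 * (wt p w)\<^sup>2 / (p * (1 - p))" by (simp add: s0_sq)
    also have "\<dots> = 2 * p * (1 - p) * (wt p w)\<^sup>2" using p0 p1 by (simp add: power2_eq_square field_simps)
    also have "\<dots> = (1 - q0) * (wt p w)\<^sup>2" by (simp add: one_minus_q0)
    finally show "ce (0 # w) * ce (0 # w) + ce (2 # w) * ce (2 # w) = (1 - q0) * (wt p w)\<^sup>2" .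
  qed simp
  also have "\<dots> = (1 - q0) * q0 ^ k" by (simp add: sum_distrib_left[symmetric] sum_wt_sq)
  finally have e: "(\<Sum>u\<in>words_eq (Suc k). ce u * ce u) = (1 - q0) * q0 ^ k" .
  show ?thesis by (subst lv_real[where a=ce and b=ce]) (auto simp: cf_ee we e)
qed

end



context cm
begin

definition aa :: real where "aa = 1 / (1 - q0)"
definition bb :: real where "bb = (2 * p - 1) * sqrt (p * (1 - p)) / (1 - q0)"

lemma aa_gt1: "aa > 1"
  using q0_bounds by (simp add: aa_def)

lemma q0_sums: "(\<lambda>n. complex_of_real (c * q0 ^ n)) sums complex_of_real (c / (1 - q0))"
proof -
  have "(\<lambda>n. q0 ^ n) sums (1 / (1 - q0))" using q0_bounds by (intro geometric_sums) auto
  then have "(\<lambda>n. c * q0 ^ n) sums (c * (1 / (1 - q0)))" by (rule sums_mult)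
  then show ?thesis by (intro sums_of_real) simp
qed

lemma inner_K: assumes g: "L2 p g" and f: "L2 p f" shows "inner_mu p g (K_inf p f) = inner_mu p g (T0 f)"
proof -
  have [measurable]: "g \<in> borel_measurable borel" using L2_meas[OF g] .
  have "K_inf p f \<in> borel_measurable borel"
    using K_inf_is f unfolding is_K_inf_def by (auto dest: L2_meas)
  note this[measurable]
  show ?thesis unfolding inner_mu_def
  proof (rule integral_cong_AE)
    show "AE x in M. cnj (g x) * K_inf p f x = cnj (g x) * T0 f x" using T_eq_T0[OF f] by eventually_elim simp
  qed measurable
qed

lemma P11: "inner_mu p phi (T0 phi) = of_real aa"
proof -
  have "lv phi phi sums inner_mu p phi (T0 phi)" by (rule inner_T0_sums[OF phi_L2 phi_L2])
  moreover have "lv phi phi sums of_real aa" unfolding lv_pp aa_def using q0_sums[of 1] by simp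
  ultimately show ?thesis using sums_unique2 by blast
qed

lemma cpe_eq: "cpe / (1 - q0) = bb"
proof -
  have "cpe = (2 * p - 1) * s0" unfolding cpe_def s0_sq[symmetric] using s0_pos by (simp add: power2_eq_square)
  then show ?thesis by (simp add: bb_def s0_def)
qed

lemma P12: "inner_mu p phi (T0 ee) = of_real bb"
proof -
  have "lv phi ee sums inner_mu p phi (T0 ee)" by (rule inner_T0_sums[OF phi_L2 ee_L2])
  moreover have "(\<lambda>k. lv phi ee (Suc k)) sums of_real bb" unfolding lv_pe_Suc cpe_eq[symmetric] by (rule q0_sums)
  then have "lv phi ee sums of_real bb" using sums_Suc_iff[of "lv phi ee"] lv_pe_0 by simp
  ultimately show ?thesis using sums_unique2 by blast
qed

lemma P21: "inner_mu p ee (T0 phi) = of_real bb"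
proof -
  have "lv ee phi sums inner_mu p ee (T0 phi)" by (rule inner_T0_sums[OF ee_L2 phi_L2])
  moreover have "(\<lambda>k. lv ee phi (Suc k)) sums of_real bb" unfolding lv_ep_Suc cpe_eq[symmetric] by (rule q0_sums)
  then have "lv ee phi sums of_real bb" using sums_Suc_iff[of "lv ee phi"] lv_ep_0 by simp
  ultimately show ?thesis using sums_unique2 by blast
qed

lemma P22: "inner_mu p ee (T0 ee) = 1"
proof -
  have "lv ee ee sums inner_mu p ee (T0 ee)" by (rule inner_T0_sums[OF ee_L2 ee_L2])
  moreover have "(\<lambda>k. lv ee ee (Suc k)) sums of_real ((1 - q0) / (1 - q0))" unfolding lv_ee_Suc by (rule q0_sums)
  then have "lv ee ee sums 1" using sums_Suc_iff[of "lv ee ee"] lv_ee_0 q0_bounds by simp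
  ultimately show ?thesis using sums_unique2 by blast
qed

lemma ind_Nil: "ind (Cw []) = phi" by (simp add: phi_def)

lemma I11: "inner_mu p phi phi = 1"
  using cf_phi[of "[]"] unfolding cf_def ind_Nil by simp

lemma I12: "inner_mu p phi ee = 0"
  using cf_ee[of "[]"] unfolding cf_def ind_Nil by (simp add: ce_0)

lemma I21: "inner_mu p ee phi = 0"
  using inner_ind[OF ee_L2, of "[]"] cf_ee[of "[]"] unfolding inner_mu_def ind_Nil by (simp add: ce_0)

lemma I22: "inner_mu p ee ee = 1"
proof -
  define hr where "hr x = (1 - p) * indicator (Cw [0]) x - p * indicator (Cw [2]) x" for x :: real
  have hr: "ee x = of_real (hr x / s0)" for x
    unfolding ee_def hh_def hr_def s0_def ind_def by (simp add: indicator_def)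
  have sq: "(hr x)\<^sup>2 = (1 - p)\<^sup>2 * indicator (Cw [0]) x + p\<^sup>2 * indicator (Cw [2]) x" for x
    using C02_disj by (cases "x \<in> Cw [0]"; cases "x \<in> Cw [2]") (auto simp: hr_def)
  have "inner_mu p ee ee = (\<integral>x. of_real ((hr x / s0)\<^sup>2) \<partial>M)"
    unfolding inner_mu_def hr by (simp add: power2_eq_square)
  also have "\<dots> = of_real (\<integral>x. (hr x / s0)\<^sup>2 \<partial>M)" by (rule integral_complex_of_real)
  also have "(\<integral>x. (hr x / s0)\<^sup>2 \<partial>M) = (\<integral>x. ((1 - p)\<^sup>2 / s0\<^sup>2) * indicator (Cw [0]) x + (p\<^sup>2 / s0\<^sup>2) * indicator (Cw [2]) x \<partial>M)"
    by (simp add: power_divide sq add_divide_distrib)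
  also have "\<dots> = ((1 - p)\<^sup>2 / s0\<^sup>2) * p + (p\<^sup>2 / s0\<^sup>2) * (1 - p)"
    using m_C0 m_C2 Cw_borel[of "[0]"] Cw_borel[of "[2]"] pM.emeasure_finite
    by (subst Bochner_Integration.integral_add) (auto intro!: integrable_real_indicator simp: less_top[symmetric])
  also have "\<dots> = ((1 - p)\<^sup>2 * p + p\<^sup>2 * (1 - p)) / s0\<^sup>2" by (simp add: add_divide_distrib)
  also have "\<dots> = (p * (1 - p)) / (p * (1 - p))" unfolding s0_sq by (simp add: power2_eq_square algebra_simps)
  also have "\<dots> = 1" using p0 p1 by simp
  finally show ?thesis by simp
qed

end



lemma le_sqrt_of_sq: fixes t D :: real assumes "t\<^sup>2 = D / 4" shows "t \<le> sqrt D / 2"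
proof -
  have "t \<le> \<bar>t\<bar>" by simp
  also have "\<bar>t\<bar> = sqrt (t\<^sup>2)" by simp
  also have "\<dots> = sqrt (D / 4)" by (simp only: assms)
  also have "\<dots> = sqrt D / sqrt 4" by (rule real_sqrt_divide)
  also have "sqrt (4::real) = 2" using real_sqrt_abs[of 2] by simp
  finally show ?thesis by simp
qed
lemma DUMMY2: True proof -
  show True by simp
qed

context cm
begin

definition Lp :: real where "Lp = 1/2 * (aa + 1) + 1/2 * sqrt ((aa - 1)\<^sup>2 + 4 * bb\<^sup>2)"

lemma Lp_root: "Lp\<^sup>2 - (aa + 1) * Lp + aa - bb\<^sup>2 = 0"
proof -
  define D where "D = (aa - 1)\<^sup>2 + 4 * bb\<^sup>2"
  have D0: "D \<ge> 0" by (simp add: D_def)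
  define S where "S = sqrt D"
  have sq: "S\<^sup>2 = D" using D0 by (simp add: S_def)
  have L: "Lp = (aa + 1) / 2 + S / 2" by (simp add: Lp_def D_def S_def)
  have "((aa + 1) / 2 + S / 2)\<^sup>2 - (aa + 1) * ((aa + 1) / 2 + S / 2) + aa - bb\<^sup>2 = (S\<^sup>2 - ((aa - 1)\<^sup>2 + 4 * bb\<^sup>2)) / 4"
    by (simp add: power2_eq_square field_simps)
  then have "Lp\<^sup>2 - (aa + 1) * Lp + aa - bb\<^sup>2 = (S\<^sup>2 - ((aa - 1)\<^sup>2 + 4 * bb\<^sup>2)) / 4"
    unfolding L .
  then show ?thesis using sq by (simp add: D_def)
qed

lemma Lp_ge: "aa \<le> Lp"
proof -
  have "aa - 1 \<le> sqrt ((aa - 1)\<^sup>2 + 4 * bb\<^sup>2)"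
    using aa_gt1 by (intro real_le_rsqrt) auto
  moreover have "Lp = aa / 2 + 1 / 2 + sqrt ((aa - 1)\<^sup>2 + 4 * bb\<^sup>2) / 2" by (simp add: Lp_def)
  ultimately show ?thesis by linarith
qed

lemma Mp11: "Mp p $ 1 $ 1 = aa" and Mp22: "Mp p $ 2 $ 2 = 1"
  and Mp12: "Mp p $ 1 $ 2 = bb" and Mp21: "Mp p $ 2 $ 1 = bb"
  by (simp_all add: Mp_def Let_def aa_def bb_def q0_def)

lemma Mp_mult: "(Mp p *v v) $ 1 = aa * v $ 1 + bb * v $ 2" "(Mp p *v v) $ 2 = bb * v $ 1 + v $ 2"
  by (simp_all add: matrix_vector_mult_def sum_2 Mp11 Mp22 Mp12 Mp21)

lemma lam_max_mat_eq: "lam_max_mat (Mp p) = Lp"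
  unfolding lam_max_mat_def
proof (rule Greatest_equality)
  define v :: "real^2" where "v = (\<chi> i. if i = 1 then Lp - 1 else bb)"
  have v1: "v $ 1 = Lp - 1" and v2: "v $ 2 = bb" by (simp_all add: v_def)
  have "v $ 1 \<noteq> 0" using v1 aa_gt1 Lp_ge by simp
  then have "v \<noteq> 0" by (metis zero_index)
  moreover have "Mp p *v v = Lp *\<^sub>R v"
  proof -
    have "aa * (Lp - 1) + bb * bb = Lp * (Lp - 1)" using Lp_root by (simp add: power2_eq_square algebra_simps)
    moreover have "bb * (Lp - 1) + bb = Lp * bb" by (simp add: algebra_simps)
    ultimately show ?thesis by (simp add: vec_eq_iff forall_2 Mp_mult v1 v2)
  qed
  ultimately show "\<exists>v::real^2. v \<noteq> 0 \<and> Mp p *v v = Lp *\<^sub>R v" by blast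
next
  fix l assume "\<exists>v::real^2. v \<noteq> 0 \<and> Mp p *v v = l *\<^sub>R v"
  then obtain v :: "real^2" where v: "v \<noteq> 0" "Mp p *v v = l *\<^sub>R v" by blast
  have "(Mp p *v v) $ 1 = l * v $ 1" "(Mp p *v v) $ 2 = l * v $ 2" using v(2) by simp_all
  then have e1: "aa * v $ 1 + bb * v $ 2 = l * v $ 1" and e2: "bb * v $ 1 + v $ 2 = l * v $ 2"
    unfolding Mp_mult by simp_all
  have nz: "v $ 1 \<noteq> 0 \<or> v $ 2 \<noteq> 0" using v(1) by (auto simp: vec_eq_iff forall_2)
  show "l \<le> Lp"
  proof (cases "v $ 1 = 0")
    case True
    then have "v $ 2 = l * v $ 2" using e2 by simp
    then have "l = 1" using nz True by simp
    then show ?thesis using aa_gt1 Lp_ge by simp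
  next
    case n1: False
    show ?thesis
    proof (cases "v $ 2 = 0")
      case True
      then have "aa * v $ 1 = l * v $ 1" using e1 by simp
      then have "l = aa" using n1 by simp
      then show ?thesis using Lp_ge by simp
    next
      case n2: False
      have A: "(aa - l) * v $ 1 = - bb * v $ 2" using e1 by (simp add: algebra_simps)
      have B: "(1 - l) * v $ 2 = - bb * v $ 1" using e2 by (simp add: algebra_simps)
      have "(aa - l) * (1 - l) * (v $ 1 * v $ 2) = ((aa - l) * v $ 1) * ((1 - l) * v $ 2)" by (simp add: algebra_simps)
      also have "\<dots> = (- bb * v $ 2) * (- bb * v $ 1)" by (simp only: A B)
      also have "\<dots> = bb\<^sup>2 * (v $ 1 * v $ 2)" by (simp add: power2_eq_square algebra_simps)
      finally have "(aa - l) * (1 - l) * (v $ 1 * v $ 2) = bb\<^sup>2 * (v $ 1 * v $ 2)" .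
      then have ch: "(aa - l) * (1 - l) = bb\<^sup>2" using n1 n2 by simp
      have id: "(l - (aa + 1) / 2)\<^sup>2 - ((aa - 1)\<^sup>2 + 4 * bb\<^sup>2) / 4 = (aa - l) * (1 - l) - bb\<^sup>2"
        by (simp add: power2_eq_square field_simps)
      have "(l - (aa + 1) / 2)\<^sup>2 = ((aa - 1)\<^sup>2 + 4 * bb\<^sup>2) / 4"
        using id ch by linarith
      then have "l - (aa + 1) / 2 \<le> sqrt ((aa - 1)\<^sup>2 + 4 * bb\<^sup>2) / 2" by (rule le_sqrt_of_sq)
      moreover have "Lp = (aa + 1) / 2 + sqrt ((aa - 1)\<^sup>2 + 4 * bb\<^sup>2) / 2" by (simp add: Lp_def)
      ultimately show ?thesis by (simp only: diff_le_eq add.commute)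
    qed
  qed
qed

end



context cm
begin

lemma inner_lin_left:
  assumes f: "L2 p f" and g: "L2 p g" and w: "L2 p w"
  shows "inner_mu p (\<lambda>t. a * f t + b * g t) w = cnj a * inner_mu p f w + cnj b * inner_mu p g w"
proof -
  have "inner_mu p (\<lambda>t. a * f t + b * g t) w = (\<integral>t. cnj a * (cnj (f t) * w t) + cnj b * (cnj (g t) * w t) \<partial>M)"
    unfolding inner_mu_def by (simp add: algebra_simps)
  also have "\<dots> = (\<integral>t. cnj a * (cnj (f t) * w t) \<partial>M) + (\<integral>t. cnj b * (cnj (g t) * w t) \<partial>M)"
    by (rule Bochner_Integration.integral_add) (use L2_prod[OF f w] L2_prod[OF g w] in auto)
  also have "\<dots> = cnj a * inner_mu p f w + cnj b * inner_mu p g w" unfolding inner_mu_def by simp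
  finally show ?thesis .
qed

lemma inner_lin_right:
  assumes f: "L2 p f" and w1: "L2 p w1" and w2: "L2 p w2"
  shows "inner_mu p f (\<lambda>t. a * w1 t + b * w2 t) = a * inner_mu p f w1 + b * inner_mu p f w2"
proof -
  have "inner_mu p f (\<lambda>t. a * w1 t + b * w2 t) = (\<integral>t. a * (cnj (f t) * w1 t) + b * (cnj (f t) * w2 t) \<partial>M)"
    unfolding inner_mu_def by (simp add: algebra_simps)
  also have "\<dots> = (\<integral>t. a * (cnj (f t) * w1 t) \<partial>M) + (\<integral>t. b * (cnj (f t) * w2 t) \<partial>M)"
    by (rule Bochner_Integration.integral_add) (use L2_prod[OF f w1] L2_prod[OF f w2] in auto)
  also have "\<dots> = a * inner_mu p f w1 + b * inner_mu p f w2" unfolding inner_mu_def by simp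
  finally show ?thesis .
qed

lemma Lp_le_sM: "Lp \<le> sM"
proof -
  define x where "x = Lp - 1"
  define y where "y = bb"
  define v where "v = (\<lambda>t. complex_of_real x * phi t + complex_of_real y * ee t)"
  have x0: "x > 0" using aa_gt1 Lp_ge by (simp add: x_def)
  have vL: "L2 p v" unfolding v_def by (intro L2_add L2_scale phi_L2 ee_L2)
  have TpL: "L2 p (T0 phi)" and TeL: "L2 p (T0 ee)" by (intro T0_L2 phi_L2 ee_L2)+
  have Tv: "T0 v = (\<lambda>t. complex_of_real x * T0 phi t + complex_of_real y * T0 ee t)"
  proof
    fix t
    have "T0 v t = T0 (\<lambda>t. complex_of_real x * phi t) t + T0 (\<lambda>t. complex_of_real y * ee t) t"
      unfolding v_def by (intro T0_add L2_scale phi_L2 ee_L2)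
    also have "\<dots> = complex_of_real x * T0 phi t + complex_of_real y * T0 ee t"
      by (simp add: T0_scale phi_L2 ee_L2)
    finally show "T0 v t = complex_of_real x * T0 phi t + complex_of_real y * T0 ee t" .
  qed
  have "inner_mu p v (T0 v) = of_real x * inner_mu p v (T0 phi) + of_real y * inner_mu p v (T0 ee)"
    unfolding Tv by (rule inner_lin_right[OF vL TpL TeL])
  also have "inner_mu p v (T0 phi) = of_real x * of_real aa + of_real y * of_real bb"
    unfolding v_def by (subst inner_lin_left[OF phi_L2 ee_L2 TpL]) (simp add: P11 P21)
  also have "inner_mu p v (T0 ee) = of_real x * of_real bb + of_real y * 1"
    unfolding v_def by (subst inner_lin_left[OF phi_L2 ee_L2 TeL]) (simp add: P12 P22)
  finally have QV: "inner_mu p v (T0 v) = of_real (x * (x * aa + y * bb) + y * (x * bb + y))" by simp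
  have "inner_mu p v v = of_real x * inner_mu p v phi + of_real y * inner_mu p v ee"
    by (subst (2) v_def, rule inner_lin_right[OF vL phi_L2 ee_L2])
  also have "inner_mu p v phi = of_real x"
    unfolding v_def by (subst inner_lin_left[OF phi_L2 ee_L2 phi_L2]) (simp add: I11 I21)
  also have "inner_mu p v ee = of_real y"
    unfolding v_def by (subst inner_lin_left[OF phi_L2 ee_L2 ee_L2]) (simp add: I12 I22)
  finally have NV: "inner_mu p v v = of_real (x\<^sup>2 + y\<^sup>2)" by (simp add: power2_eq_square)
  have eq1: "x * aa + y * bb = Lp * x"
    using Lp_root by (simp add: x_def y_def power2_eq_square algebra_simps)
  have eq2: "x * bb + y = Lp * y" by (simp add: x_def y_def algebra_simps)
  have Qv: "Qf v = Lp * (x\<^sup>2 + y\<^sup>2)"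
    unfolding Qf_def QV eq1 eq2 by (simp add: power2_eq_square algebra_simps)
  have "(complex_of_real (nsq v)) = complex_of_real (x\<^sup>2 + y\<^sup>2)" using inner_self[OF vL] NV by metis
  then have Nv: "nsq v = x\<^sup>2 + y\<^sup>2" by (simp only: of_real_eq_iff)
  have pos: "x\<^sup>2 + y\<^sup>2 > 0" using x0 by (simp add: add_pos_nonneg)
  have "nsq v \<noteq> 0" using Nv pos by linarith
  then have "Qf v \<le> sM * nsq v" by (rule EV_le[OF vL])
  then have "Lp * (x\<^sup>2 + y\<^sup>2) \<le> sM * (x\<^sup>2 + y\<^sup>2)" using Qv Nv by simp
  then show ?thesis using pos by simp
qed

lemma sM_pos: "0 < sM" using Lp_le_sM Lp_ge aa_gt1 by simp

lemma lam_max_op_eq: "lam_max_op p (K_inf p) = sM"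
  unfolding lam_max_op_def
proof (rule Greatest_equality)
  obtain g where g: "L2 p g" "nsq g \<noteq> 0" "\<And>x. T0 g x = of_real sM * g x" using sM_eigen[OF sM_pos] by blast
  have "AE x in M. K_inf p g x = of_real sM * g x" using T_eq_T0[OF g(1)] by eventually_elim (simp add: g(3))
  moreover have "L2norm p g \<noteq> 0" using g(2) nsq_nonneg[of g] by (simp add: L2norm_nsq)
  ultimately show "\<exists>f. L2 p f \<and> L2norm p f \<noteq> 0 \<and> (AE x in M. K_inf p f x = complex_of_real sM * f x)"
    using g(1) by blast
next
  fix l assume "\<exists>f. L2 p f \<and> L2norm p f \<noteq> 0 \<and> (AE x in M. K_inf p f x = complex_of_real l * f x)"
  then obtain f where f: "L2 p f" "L2norm p f \<noteq> 0" "AE x in M. K_inf p f x = complex_of_real l * f x" by blast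
  have "nsq f \<noteq> 0" using f(2) by (simp add: L2norm_nsq)
  then show "l \<le> sM" by (rule eig_le[OF f(1) _ f(3)])
qed

lemma main:
  defines "B \<equiv> (\<lambda>i::2. if i = 1 then phi else ee)"
  shows "inner_mu p phi phi = 1 \<and> inner_mu p ee ee = 1 \<and> inner_mu p phi ee = 0
    \<and> (\<chi> i j. inner_mu p (B i) (K_inf p (B j))) = (\<chi> i j. complex_of_real (Mp p $ i $ j))
    \<and> Mp p = (\<chi> i j. if i = 1 \<and> j = 1 then 1 / (1 - q0)
                else if i = 2 \<and> j = 2 then 1
                else (2 * p - 1) * sqrt (p * (1 - p)) / (1 - q0))
    \<and> lam_max_op p (K_inf p) \<ge> lam_max_mat (Mp p)
    \<and> lam_max_mat (Mp p) = 1/2 * (1 / (1 - q0) + 1)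
        + 1/2 * sqrt ((1 / (1 - q0) - 1)\<^sup>2 + 4 * (2 * p - 1)\<^sup>2 * p * (1 - p) / (1 - q0)\<^sup>2)"
proof (intro conjI)
  show "inner_mu p phi phi = 1" by (rule I11)
  show "inner_mu p ee ee = 1" by (rule I22)
  show "inner_mu p phi ee = 0" by (rule I12)
  have B1: "B 1 = phi" and B2: "B 2 = ee" by (simp_all add: B_def)
  show "(\<chi> i j. inner_mu p (B i) (K_inf p (B j))) = (\<chi> i j. complex_of_real (Mp p $ i $ j))"
    by (simp add: vec_eq_iff forall_2 B1 B2 inner_K phi_L2 ee_L2 P11 P12 P21 P22 Mp11 Mp12 Mp21 Mp22)
  show "Mp p = (\<chi> i j. if i = 1 \<and> j = 1 then 1 / (1 - q0)
                else if i = 2 \<and> j = 2 then 1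
                else (2 * p - 1) * sqrt (p * (1 - p)) / (1 - q0))"
    unfolding Mp_def Let_def q0_def by simp
  show "lam_max_op p (K_inf p) \<ge> lam_max_mat (Mp p)"
    using Lp_le_sM by (simp add: lam_max_op_eq lam_max_mat_eq)
  have "4 * bb\<^sup>2 = 4 * (2 * p - 1)\<^sup>2 * p * (1 - p) / (1 - q0)\<^sup>2"
    using p0 p1 by (simp add: bb_def power_mult_distrib power_divide)
  then show "lam_max_mat (Mp p) = 1/2 * (1 / (1 - q0) + 1)
        + 1/2 * sqrt ((1 / (1 - q0) - 1)\<^sup>2 + 4 * (2 * p - 1)\<^sup>2 * p * (1 - p) / (1 - q0)\<^sup>2)"
    by (simp add: lam_max_mat_eq Lp_def aa_def)
qed

end


theorem corollary5p3:
  fixes p :: real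
  assumes "0 < p" and "p < 1"
  defines "q \<equiv> p\<^sup>2 + (1 - p)\<^sup>2"
  defines "\<phi> \<equiv> ind cantor"
  defines "h \<equiv> (\<lambda>x. complex_of_real (1 - p) * ind (Cw [0]) x - complex_of_real p * ind (Cw [2]) x)"
  defines "e \<equiv> (\<lambda>x. h x / complex_of_real (sqrt (p * (1 - p))))"
  defines "B \<equiv> (\<lambda>i::2. if i = 1 then \<phi> else e)"
  shows "inner_mu p \<phi> \<phi> = 1 \<and> inner_mu p e e = 1 \<and> inner_mu p \<phi> e = 0
    \<and> (\<chi> i j. inner_mu p (B i) (K_inf p (B j))) = (\<chi> i j. complex_of_real (Mp p $ i $ j))
    \<and> Mp p = (\<chi> i j. if i = 1 \<and> j = 1 then 1 / (1 - q)
                else if i = 2 \<and> j = 2 then 1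
                else (2 * p - 1) * sqrt (p * (1 - p)) / (1 - q))
    \<and> lam_max_op p (K_inf p) \<ge> lam_max_mat (Mp p)
    \<and> lam_max_mat (Mp p) = 1/2 * (1 / (1 - q) + 1)
        + 1/2 * sqrt ((1 / (1 - q) - 1)\<^sup>2 + 4 * (2 * p - 1)\<^sup>2 * p * (1 - p) / (1 - q)\<^sup>2)"
proof -
  interpret cm p using assms(1,2) by unfold_locales
  have q: "q = q0" by (simp add: q_def q0_def)
  have ph: "\<phi> = phi" by (simp add: \<phi>_def phi_def)
  have hh: "h = hh" by (simp add: h_def hh_def)
  have ee: "e = ee" by (simp add: e_def ee_def hh)
  have BB: "B = (\<lambda>i::2. if i = 1 then phi else ee)" unfolding B_def ph ee by (rule refl)
  show ?thesis unfolding q ph ee BB by (rule main)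
qed


end
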